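(* In the setting below, let $\mu_P$ be the induced measure on $P$, $\mu_P(E)=\int_{P^{(0)}}\lambda_P^v(E)\,d\mu_P^{(0)}(v)$. Then for every Borel function $f$ on $P$, $$\int_P f\,d\mu_P=\int_{G^{(0)}}\int_G\int_{S^{(0)}}\int_S\int_{T^{(0)}}\int_T f(\sigma,y,\tau)\,d\lambda_T^t(\tau)\,d\gamma_q^{d_G(y)}(t)\,d\lambda_S^s(\sigma)\,d\gamma_p^{r_G(y)}(s)\,d\lambda_G^u(y)\,d\mu_G^{(0)}(u).$$
   Context: Setting: $(S,\lambda_S^\bullet,\mu_S^{(0)})$, $(G,\lambda_G^\bullet,\mu_G^{(0)})$, $(T,\lambda_T^\bullet,\mu_T^{(0)})$ are Haar groupoids, i.e. second countable, locally compact, Hausdorff topological groupoids with continuous left Haar systems (families $\lambda^u$ of measures concentrated on $r^{-1}(u)$, continuous in $u$ against continuous compactly supported $f\ge0$, left invariant $\lambda^{d(x)}(E)=\lambda^{r(x)}(x(E\cap r^{-1}(d(x))))$, positive on open sets meeting $r^{-1}(u)$) and non-zero quasi-invariant Radon measures $\mu^{(0)}$ on unit spaces (the induced measure $\mu(E)=\int\lambda^u(E)d\mu^{(0)}(u)$ is equivalent to $E\mapsto\mu(E^{-1})$). $p:S\to G$, $q:T\to G$ are homomorphisms of Haar groupoids (continuous homomorphisms preserving the class of induced measures); $\mu_G$ is the induced measure of $G$. The weak pullback is $P=\{(s,g,t)\in S\times G\times T: r_G(g)=r_G(p(s)),\ d_G(g)=r_G(q(t))\}$, with $r_P(s,g,t)=(r_S(s),g,r_T(t))$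 and unit space $P^{(0)}=\{(s,g,t):s\in S^{(0)},t\in T^{(0)},r_G(g)=p(s),d_G(g)=q(t)\}$; $\lambda_P^{(s,g,t)}=\lambda_S^s\times\delta_g\times\lambda_T^t$ for $(s,g,t)\in P^{(0)}$. A Borel system of measures (BSM) on a Borel map $\pi:X\to Y$ is a family $\{\gamma^y\}$ of positive Borel measures on $X$, $\gamma^y$ concentrated on $\pi^{-1}(y)$, with $y\mapsto\gamma^y(E)$ Borel; a disintegration of $\mu$ w.r.t. $\nu$ if $\mu(E)=\int\gamma^y(E)d\nu(y)$. $\gamma_p^\bullet$ (resp. $\gamma_q^\bullet$) is a locally finite and locally bounded BSM on $p|_{S^{(0)}}:S^{(0)}\to G^{(0)}$ (resp. $q|_{T^{(0)}}$) disintegrating $\mu_S^{(0)}$ (resp. $\mu_T^{(0)}$) w.r.t. $\mu_G^{(0)}$. For $x\in G$, $\eta^x=\gamma_p^{r_G(x)}\times\delta_x\times\gamma_q^{d_G(x)}$ on $P^{(0)}$, and $\mu_P^{(0)}(B)=\int_G\eta^x(B)\,d\mu_G(x)$. *)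

theory Defs
  imports "HOL-Probability.Probability"
begin

text \<open>A groupoid whose set of arrows is the whole type 'a, together with a
  left Haar system (indexed by units) and a measure on the unit space.\<close>

record 'a hgpd =
  rg   :: "'a \<Rightarrow> 'a"
  dm   :: "'a \<Rightarrow> 'a"
  mul  :: "'a \<Rightarrow> 'a \<Rightarrow> 'a"
  iv   :: "'a \<Rightarrow> 'a"
  haar :: "'a \<Rightarrow> 'a measure"
  mu0  :: "'a measure"

definition units :: "('a, 'b) hgpd_scheme \<Rightarrow> 'a set" where
  "units G = range (rg G)"

definition groupoid :: "('a, 'b) hgpd_scheme \<Rightarrow> bool" where
  "groupoid G \<longleftrightarrow>
     (\<forall>x. rg G (rg G x) = rg G x \<and> dm G (rg G x) = rg G x \<and>
          rg G (dm G x) = dm G x \<and> dm G (dm G x) = dm G x) \<and>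
     (\<forall>x y. dm G x = rg G y \<longrightarrow> rg G (mul G x y) = rg G x \<and> dm G (mul G x y) = dm G y) \<and>
     (\<forall>x y z. dm G x = rg G y \<longrightarrow> dm G y = rg G z \<longrightarrow>
          mul G (mul G x y) z = mul G x (mul G y z)) \<and>
     (\<forall>x. mul G (rg G x) x = x \<and> mul G x (dm G x) = x) \<and>
     (\<forall>x. rg G (iv G x) = dm G x \<and> dm G (iv G x) = rg G x \<and>
          mul G x (iv G x) = rg G x \<and> mul G (iv G x) x = dm G x)"

text \<open>Second countable, locally compact, Hausdorff topological groupoid
  (second countability and Hausdorffness come from the type class).\<close>
definition top_groupoid :: "('a::topological_space, 'b) hgpd_scheme \<Rightarrow> bool" where
  "top_groupoid G \<longleftrightarrow> groupoid G \<and> locally compact (UNIV :: 'a set) \<and>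
     continuous_on {(x, y). dm G x = rg G y} (\<lambda>(x, y). mul G x y) \<and>
     continuous_on UNIV (iv G)"

definition haar_system :: "('a::topological_space, 'b) hgpd_scheme \<Rightarrow> bool" where
  "haar_system G \<longleftrightarrow>
     (\<forall>u\<in>units G. sets (haar G u) = sets borel) \<and>
     (\<forall>u\<in>units G. emeasure (haar G u) (- (rg G -` {u})) = 0) \<and>
     (\<forall>f::'a \<Rightarrow> real. continuous_on UNIV f \<longrightarrow> (\<forall>x. 0 \<le> f x) \<longrightarrow>
        compact (closure {x. f x \<noteq> 0}) \<longrightarrow>
        (\<forall>u\<in>units G. (\<integral>\<^sup>+ x. ennreal (f x) \<partial>haar G u) < \<infinity>) \<and>
        continuous_on (units G) (\<lambda>u. enn2real (\<integral>\<^sup>+ x. ennreal (f x) \<partial>haar G u))) \<and>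
     (\<forall>x. \<forall>E\<in>sets borel.
        emeasure (haar G (dm G x)) E =
        emeasure (haar G (rg G x)) (mul G x ` (E \<inter> rg G -` {dm G x}))) \<and>
     (\<forall>u\<in>units G. \<forall>V. open V \<longrightarrow> V \<inter> rg G -` {u} \<noteq> {} \<longrightarrow>
        0 < emeasure (haar G u) V)"

definition induced :: "('a::topological_space, 'b) hgpd_scheme \<Rightarrow> 'a measure" where
  "induced G = measure_of UNIV (sets borel)
      (\<lambda>E. \<integral>\<^sup>+ u. emeasure (haar G u) E \<partial>mu0 G)"

text \<open>Non-zero quasi-invariant Radon measure on the unit space
  (modelled as a Borel measure on 'a concentrated on the units).\<close>
definition quasi_inv_radon :: "('a::topological_space, 'b) hgpd_scheme \<Rightarrow> bool" where
  "quasi_inv_radon G \<longleftrightarrow>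
     sets (mu0 G) = sets borel \<and>
     emeasure (mu0 G) (- units G) = 0 \<and>
     emeasure (mu0 G) UNIV \<noteq> 0 \<and>
     (\<forall>K. compact K \<longrightarrow> emeasure (mu0 G) K < \<infinity>) \<and>
     (\<forall>E\<in>sets borel. emeasure (induced G) E = 0 \<longleftrightarrow>
                      emeasure (induced G) (iv G ` E) = 0)"

definition haar_groupoid :: "('a::topological_space, 'b) hgpd_scheme \<Rightarrow> bool" where
  "haar_groupoid G \<longleftrightarrow> top_groupoid G \<and> haar_system G \<and> quasi_inv_radon G"

definition haar_hom ::
  "('a::topological_space, 'b) hgpd_scheme \<Rightarrow> ('c::topological_space, 'd) hgpd_scheme
     \<Rightarrow> ('a \<Rightarrow> 'c) \<Rightarrow> bool" where
  "haar_hom S G p \<longleftrightarrow> continuous_on UNIV p \<and>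
     (\<forall>x y. dm S x = rg S y \<longrightarrow>
        dm G (p x) = rg G (p y) \<and> p (mul S x y) = mul G (p x) (p y)) \<and>
     (\<forall>E\<in>sets borel. emeasure (induced G) E = 0 \<longleftrightarrow>
                      emeasure (induced S) (p -` E) = 0)"

definition bsm :: "'x::topological_space set \<Rightarrow> 'y::topological_space set \<Rightarrow>
    ('x \<Rightarrow> 'y) \<Rightarrow> ('y \<Rightarrow> 'x measure) \<Rightarrow> bool" where
  "bsm X Y \<pi> \<gamma> \<longleftrightarrow>
     (\<forall>y\<in>Y. sets (\<gamma> y) = sets borel \<and>
            emeasure (\<gamma> y) (- (X \<inter> \<pi> -` {y})) = 0) \<and>
     (\<forall>E\<in>sets borel. (\<lambda>y. emeasure (\<gamma> y) E) \<in> borel_measurable (restrict_space borel Y))"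

definition loc_finite_bsm :: "'x::topological_space set \<Rightarrow> 'y::topological_space set \<Rightarrow>
    ('y \<Rightarrow> 'x measure) \<Rightarrow> bool" where
  "loc_finite_bsm X Y \<gamma> \<longleftrightarrow>
     (\<forall>y\<in>Y. \<forall>K. compact K \<longrightarrow> K \<subseteq> X \<longrightarrow> emeasure (\<gamma> y) K < \<infinity>)"

definition loc_bounded_bsm :: "'x::topological_space set \<Rightarrow> 'y::topological_space set \<Rightarrow>
    ('y \<Rightarrow> 'x measure) \<Rightarrow> bool" where
  "loc_bounded_bsm X Y \<gamma> \<longleftrightarrow>
     (\<forall>K. compact K \<longrightarrow> K \<subseteq> X \<longrightarrow> (\<exists>c<\<infinity>. \<forall>y\<in>Y. emeasure (\<gamma> y) K \<le> c))"

definition disintegrates :: "('y \<Rightarrow> 'x::topological_space measure) \<Rightarrow> 'x measure \<Rightarrow> 'y measure \<Rightarrow> bool" where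
  "disintegrates \<gamma> \<mu> \<nu> \<longleftrightarrow>
     (\<forall>E\<in>sets borel. emeasure \<mu> E = (\<integral>\<^sup>+ y. emeasure (\<gamma> y) E \<partial>\<nu>))"

definition wp_units ::
  "('s, 'a) hgpd_scheme \<Rightarrow> ('g, 'b) hgpd_scheme \<Rightarrow> ('t, 'c) hgpd_scheme \<Rightarrow>
   ('s \<Rightarrow> 'g) \<Rightarrow> ('t \<Rightarrow> 'g) \<Rightarrow> ('s \<times> 'g \<times> 't) set" where
  "wp_units S G T p q = {(s, g, t). s \<in> units S \<and> t \<in> units T \<and>
       rg G g = p s \<and> dm G g = q t}"

definition wp_haar ::
  "('s::topological_space, 'a) hgpd_scheme \<Rightarrow> ('t::topological_space, 'c) hgpd_scheme \<Rightarrow>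
   's \<times> 'g::topological_space \<times> 't \<Rightarrow> ('s \<times> 'g \<times> 't) measure" where
  "wp_haar S T v = (case v of (s, g, t) \<Rightarrow>
      haar S s \<Otimes>\<^sub>M (return borel g \<Otimes>\<^sub>M haar T t))"

definition wp_eta ::
  "('g::topological_space, 'b) hgpd_scheme \<Rightarrow> ('g \<Rightarrow> 's::topological_space measure) \<Rightarrow>
   ('g \<Rightarrow> 't::topological_space measure) \<Rightarrow> 'g \<Rightarrow> ('s \<times> 'g \<times> 't) measure" where
  "wp_eta G \<gamma>p \<gamma>q x = \<gamma>p (rg G x) \<Otimes>\<^sub>M (return borel x \<Otimes>\<^sub>M \<gamma>q (dm G x))"

definition wp_mu0 ::
  "('g::topological_space, 'b) hgpd_scheme \<Rightarrow> ('g \<Rightarrow> 's::topological_space measure) \<Rightarrow>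
   ('g \<Rightarrow> 't::topological_space measure) \<Rightarrow> ('s \<times> 'g \<times> 't) measure" where
  "wp_mu0 G \<gamma>p \<gamma>q = measure_of UNIV (sets borel)
      (\<lambda>B. \<integral>\<^sup>+ x. emeasure (wp_eta G \<gamma>p \<gamma>q x) B \<partial>induced G)"

definition wp_induced ::
  "('s::topological_space, 'a) hgpd_scheme \<Rightarrow> ('g::topological_space, 'b) hgpd_scheme \<Rightarrow>
   ('t::topological_space, 'c) hgpd_scheme \<Rightarrow> ('s \<Rightarrow> 'g) \<Rightarrow> ('t \<Rightarrow> 'g) \<Rightarrow>
   ('g \<Rightarrow> 's measure) \<Rightarrow> ('g \<Rightarrow> 't measure) \<Rightarrow> ('s \<times> 'g \<times> 't) measure" where
  "wp_induced S G T p q \<gamma>p \<gamma>q = measure_of UNIV (sets borel)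
      (\<lambda>E. \<integral>\<^sup>+ v \<in> wp_units S G T p q. emeasure (wp_haar S T v) E \<partial>wp_mu0 G \<gamma>p \<gamma>q)"

end

theory Submission
  imports Defs
begin

lemma lc_nbhd:
  fixes W :: "'a::{second_countable_topology,t2_space} set"
  assumes LC: "locally compact (UNIV :: 'a set)" and "open W" "x \<in> W"
  shows "\<exists>U K. open U \<and> compact K \<and> x \<in> U \<and> U \<subseteq> K \<and> K \<subseteq> W"
proof -
  have "openin (top_of_set UNIV) W" using assms by simp
  from LC[unfolded locally_def, rule_format, OF conjI[OF this \<open>x \<in> W\<close>]]
  obtain U V where "openin (top_of_set UNIV) U" "compact V" "x \<in> U" "U \<subseteq> V" "V \<subseteq> W"
    by blast
  then show ?thesis by (intro exI[of _ U] exI[of _ V]) simp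
qed
lemma lc_compact_nbhd:
  fixes W :: "'a::{second_countable_topology,t2_space} set"
  assumes LC: "locally compact (UNIV :: 'a set)" and K: "compact K" and W: "open W" "K \<subseteq> W"
  shows "\<exists>V. open V \<and> K \<subseteq> V \<and> compact (closure V) \<and> closure V \<subseteq> W"
proof -
  have "\<exists>U C. open U \<and> compact C \<and> x \<in> U \<and> U \<subseteq> C \<and> C \<subseteq> W" if "x \<in> K" for x
    using lc_nbhd[OF LC W(1)] W(2) that by blast
  then obtain FU FC where F: "\<And>x. x\<in>K \<Longrightarrow> open (FU x) \<and> compact (FC x) \<and> x \<in> FU x \<and> FU x \<subseteq> FC x \<and> FC x \<subseteq> W"
    by metis
  have cov: "K \<subseteq> (\<Union>x\<in>K. FU x)" using F by blast
  have opn: "\<And>x. x\<in>K \<Longrightarrow> open (FU x)" using F by blast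
  obtain D where D: "D \<subseteq> K" "finite D" "K \<subseteq> (\<Union>x\<in>D. FU x)"
    using compactE_image[OF K opn cov] by blast
  define V where "V = (\<Union>x\<in>D. FU x)"
  define C where "C = (\<Union>x\<in>D. FC x)"
  have "compact C" unfolding C_def using D F by (intro compact_UN) auto
  hence "closed C" by (rule compact_imp_closed)
  have "V \<subseteq> C" unfolding V_def C_def using D F by blast
  hence cl: "closure V \<subseteq> C" using \<open>closed C\<close> closure_minimal by blast
  have "open V" unfolding V_def using D F by auto
  moreover have "compact (closure V)"
    using compact_Int_closed[OF \<open>compact C\<close>, of "closure V"] cl
    by (simp add: Int_absorb1)
  moreover have "C \<subseteq> W" unfolding C_def using D F by blast
  ultimately show ?thesis using cl D(3) unfolding V_def by blast
qed

lemma hausdorff_euclidean_t2: "Hausdorff_space (euclidean :: 'a::t2_space topology)"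
  unfolding Hausdorff_space_def disjnt_def
proof (intro allI impI)
  fix x y :: 'a assume "x \<in> topspace euclidean \<and> y \<in> topspace euclidean \<and> x \<noteq> y"
  hence "x \<noteq> y" by blast
  from hausdorff[OF this] obtain U V where "open U" "open V" "x \<in> U" "y \<in> V" "U \<inter> V = {}" by blast
  then show "\<exists>U V. openin euclidean U \<and> openin euclidean V \<and> x \<in> U \<and> y \<in> V \<and> U \<inter> V = {}" by auto
qed

lemma lc_space:
  assumes LC: "locally compact (UNIV :: 'a::{second_countable_topology,t2_space} set)"
  shows "locally_compact_space (euclidean :: 'a topology)"
  unfolding locally_compact_space_def
  using lc_nbhd[OF LC, of UNIV] by (auto simp: compactin_euclidean_iff)

lemma cr_space:
  assumes LC: "locally compact (UNIV :: 'a::{second_countable_topology,t2_space} set)"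
  shows "completely_regular_space (euclidean :: 'a topology)"
  using locally_compact_regular_imp_completely_regular_space[OF lc_space[OF LC]] hausdorff_euclidean_t2
  by blast

lemma bump:
  fixes W :: "'a::{second_countable_topology,t2_space} set"
  assumes LC: "locally compact (UNIV :: 'a set)" and K: "compact K" and W: "open W" "K \<subseteq> W"
  shows "\<exists>\<phi>::'a\<Rightarrow>real. continuous_on UNIV \<phi> \<and> (\<forall>x. 0 \<le> \<phi> x \<and> \<phi> x \<le> 1) \<and>
     (\<forall>x\<in>K. \<phi> x = 1) \<and> (\<forall>x. x \<notin> W \<longrightarrow> \<phi> x = 0) \<and> compact (closure {x. \<phi> x \<noteq> 0})"
proof -
  obtain V where V: "open V" "K \<subseteq> V" "compact (closure V)" "closure V \<subseteq> W"
    using lc_compact_nbhd[OF LC K W] by blast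
  obtain f where f: "continuous_map euclidean (top_of_set {0..1::real}) f" "f ` (-V) \<subseteq> {0}" "f ` K \<subseteq> {1}"
    using Urysohn_completely_regular_compact_closed[of 0 1 euclidean K "-V"] cr_space[OF LC] K V
    by (auto simp: compactin_euclidean_iff disjnt_def closed_Compl)
  have cont: "continuous_on UNIV f"
    using f(1) by (simp add: continuous_map_in_subtopology)
  have rng: "f x \<in> {0..1}" for x
    using f(1) by (auto simp: continuous_map_in_subtopology)
  have sub: "{x. f x \<noteq> 0} \<subseteq> V" using f(2) by blast
  hence "closure {x. f x \<noteq> 0} \<subseteq> closure V" by (rule closure_mono)
  hence "compact (closure {x. f x \<noteq> 0})"
    using compact_Int_closed[OF V(3), of "closure {x. f x \<noteq> 0}"] by (simp add: Int_absorb1)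
  moreover have "x \<notin> W \<Longrightarrow> f x = 0" for x using sub V(4) closure_subset by blast
  ultimately show ?thesis using cont rng f(3) by (intro exI[of _ f]) auto
qed

lemma sigma_compact_open:
  fixes U :: "'a::{second_countable_topology,t2_space} set"
  assumes LC: "locally compact (UNIV :: 'a set)" and U: "open U"
  shows "\<exists>K::nat \<Rightarrow> 'a set. incseq K \<and> (\<forall>n. compact (K n)) \<and> (\<Union>n. K n) = U"
proof -
  obtain B :: "'a set set" where B: "countable B" "\<And>C. C \<in> B \<Longrightarrow> open C"
    "\<And>S. open S \<Longrightarrow> \<exists>U. U \<subseteq> B \<and> S = \<Union>U"
    using univ_second_countable by blast
  define F where "F = {b\<in>B. compact (closure b) \<and> closure b \<subseteq> U}"
  have cF: "countable F" unfolding F_def using B(1) by auto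
  have UF: "U = (\<Union>b\<in>F. closure b)"
  proof
    show "(\<Union>b\<in>F. closure b) \<subseteq> U" unfolding F_def by blast
    show "U \<subseteq> (\<Union>b\<in>F. closure b)"
    proof
      fix x assume "x \<in> U"
      then obtain V where V: "open V" "x \<in> V" "compact (closure V)" "closure V \<subseteq> U"
        using lc_compact_nbhd[OF LC, of "{x}" U] U by auto
      obtain U' where "U' \<subseteq> B" "V = \<Union>U'" using B(3)[OF V(1)] by blast
      then obtain b where b: "b \<in> B" "x \<in> b" "b \<subseteq> V" using V(2) by blast
      have "closure b \<subseteq> closure V" using b(3) by (rule closure_mono)
      hence "compact (closure b)"
        using compact_Int_closed[OF V(3), of "closure b"] by (simp add: Int_absorb1)
      moreover have "closure b \<subseteq> U" using \<open>closure b \<subseteq> closure V\<close> V(4) by blast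
      ultimately have "b \<in> F" unfolding F_def using b by blast
      then show "x \<in> (\<Union>b\<in>F. closure b)" using b(2) closure_subset by blast
    qed
  qed
  show ?thesis
  proof (cases "F = {}")
    case True
    then show ?thesis using UF by (intro exI[of _ "\<lambda>n. {}"]) (auto simp: incseq_def)
  next
    case False
    define f where "f = from_nat_into F"
    have rf: "range f = F" unfolding f_def using range_from_nat_into[OF False cF] .
    define K where "K n = (\<Union>i\<le>n. closure (f i))" for n
    have "incseq K" unfolding K_def incseq_def by (intro allI impI UN_mono) auto
    moreover have "compact (K n)" for n
    proof -
      have "f i \<in> F" for i using rf by blast
      then show ?thesis unfolding K_def F_def by (intro compact_UN) auto
    qed
    moreover have "(\<Union>n. K n) = U"
    proof -
      have "(\<Union>n. K n) = (\<Union>i. closure (f i))" unfolding K_def by auto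
      also have "\<dots> = (\<Union>b\<in>F. closure b)" using rf by auto
      finally show ?thesis using UF by simp
    qed
    ultimately show ?thesis by blast
  qed
qed

lemma exhaustion:
  assumes LC: "locally compact (UNIV :: 'a::{second_countable_topology,t2_space} set)"
  shows "\<exists>W::nat \<Rightarrow> 'a set. incseq W \<and> (\<forall>n. open (W n)) \<and> (\<forall>n. compact (closure (W n))) \<and> (\<Union>n. W n) = UNIV"
proof -
  obtain K :: "nat \<Rightarrow> 'a set" where K: "incseq K" "\<And>n. compact (K n)" "(\<Union>n. K n) = UNIV"
    using sigma_compact_open[OF LC open_UNIV] by blast
  have "\<forall>n. \<exists>V. open V \<and> K n \<subseteq> V \<and> compact (closure V)"
    using lc_compact_nbhd[OF LC K(2) open_UNIV] by blast
  from choice[OF this] obtain V where V0: "\<forall>n. open (V n) \<and> K n \<subseteq> V n \<and> compact (closure (V n))"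
    by blast
  have V: "\<And>n. open (V n)" "\<And>n. K n \<subseteq> V n" "\<And>n. compact (closure (V n))"
    using V0 by auto
  define W where "W n = (\<Union>i\<le>n. V i)" for n
  have "incseq W" unfolding W_def incseq_def by (intro allI impI UN_mono) auto
  moreover have "open (W n)" for n unfolding W_def using V(1) by auto
  moreover have "compact (closure (W n))" for n
  proof -
    have c: "compact (\<Union>i\<le>n. closure (V i))" using V(3) by (intro compact_UN) auto
    have "closure (W n) \<subseteq> (\<Union>i\<le>n. closure (V i))"
      unfolding W_def using compact_imp_closed[OF c] closure_subset
      by (intro closure_minimal) auto
    then show ?thesis using compact_Int_closed[OF c, of "closure (W n)"] by (simp add: Int_absorb1)
  qed
  moreover have "(\<Union>n. W n) = UNIV"
  proof -
    { fix x :: 'a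
      obtain n where "x \<in> K n" using K(3) by blast
      hence "x \<in> W n" using V(2)[of n] unfolding W_def by blast
      hence "x \<in> (\<Union>n. W n)" by blast }
    then show ?thesis by blast
  qed
  ultimately show ?thesis by blast
qed

definition cc_cont :: "('a::topological_space \<Rightarrow> 'b::topological_space measure) \<Rightarrow> 'a set \<Rightarrow> bool" where
  "cc_cont lam C \<longleftrightarrow> (\<forall>f::'b \<Rightarrow> real. continuous_on UNIV f \<longrightarrow> (\<forall>x. 0 \<le> f x) \<longrightarrow>
        compact (closure {x. f x \<noteq> 0}) \<longrightarrow>
        (\<forall>u\<in>C. (\<integral>\<^sup>+ x. ennreal (f x) \<partial>lam u) < \<infinity>) \<and>
        continuous_on C (\<lambda>u. enn2real (\<integral>\<^sup>+ x. ennreal (f x) \<partial>lam u)))"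

lemma hm_compact_finite:
  fixes lam :: "'a::{second_countable_topology,t2_space} \<Rightarrow> 'b::{second_countable_topology,t2_space} measure"
  assumes LC: "locally compact (UNIV :: 'b set)" and S: "\<forall>u\<in>C. sets (lam u) = sets borel"
    and CC: "cc_cont lam C" and K: "compact K" and u: "u \<in> C"
  shows "emeasure (lam u) K < \<infinity>"
proof -
  obtain \<phi> :: "'b \<Rightarrow> real" where \<phi>: "continuous_on UNIV \<phi>" "\<forall>x. 0 \<le> \<phi> x \<and> \<phi> x \<le> 1"
    "\<forall>x\<in>K. \<phi> x = 1" "compact (closure {x. \<phi> x \<noteq> 0})"
    using bump[OF LC K open_UNIV] by blast
  have fin: "(\<integral>\<^sup>+ x. ennreal (\<phi> x) \<partial>lam u) < \<infinity>"
    using CC \<phi> u unfolding cc_cont_def by blast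
  have Ks: "K \<in> sets (lam u)" using S u compact_imp_closed[OF K] by auto
  have "emeasure (lam u) K = (\<integral>\<^sup>+ x. indicator K x \<partial>lam u)" using Ks by simp
  also have "\<dots> \<le> (\<integral>\<^sup>+ x. ennreal (\<phi> x) \<partial>lam u)"
    using \<phi>(3) by (intro nn_integral_mono) (auto simp: indicator_def)
  finally show ?thesis using fin by (simp add: order_le_less_trans)
qed

lemma hm_open:
  fixes lam :: "'a::{second_countable_topology,t2_space} \<Rightarrow> 'b::{second_countable_topology,t2_space} measure"
  assumes LC: "locally compact (UNIV :: 'b set)" and S: "\<forall>u\<in>C. sets (lam u) = sets borel"
    and CC: "cc_cont lam C" and U: "open U"
  shows "(\<lambda>u. emeasure (lam u) U) \<in> borel_measurable (restrict_space borel C)"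
proof -
  obtain K :: "nat \<Rightarrow> 'b set" where K: "incseq K" "\<And>n. compact (K n)" "(\<Union>n. K n) = U"
    using sigma_compact_open[OF LC U] by blast
  have "\<forall>n. \<exists>\<phi>::'b\<Rightarrow>real. continuous_on UNIV \<phi> \<and> (\<forall>x. 0 \<le> \<phi> x \<and> \<phi> x \<le> 1) \<and>
     (\<forall>x\<in>K n. \<phi> x = 1) \<and> (\<forall>x. x \<notin> U \<longrightarrow> \<phi> x = 0) \<and> compact (closure {x. \<phi> x \<noteq> 0})"
    using bump[OF LC K(2) U] K(3) by blast
  from choice[OF this] obtain \<phi> :: "nat \<Rightarrow> 'b \<Rightarrow> real" where \<phi>: "\<forall>n. continuous_on UNIV (\<phi> n) \<and> (\<forall>x. 0 \<le> \<phi> n x \<and> \<phi> n x \<le> 1) \<and>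
     (\<forall>x\<in>K n. \<phi> n x = 1) \<and> (\<forall>x. x \<notin> U \<longrightarrow> \<phi> n x = 0) \<and> compact (closure {x. \<phi> n x \<noteq> 0})"
    by blast
  define g where "g n u = (\<integral>\<^sup>+ x. ennreal (\<phi> n x) \<partial>lam u)" for n u
  have gfin: "g n u < \<infinity>" and gcont: "continuous_on C (\<lambda>u. enn2real (g n u))" if "u \<in> C" for n u
    using CC \<phi> that unfolding cc_cont_def g_def by blast+
  have gm: "g n \<in> borel_measurable (restrict_space borel C)" for n
  proof -
    have "continuous_on C (\<lambda>u. enn2real (g n u))"
      using CC \<phi> unfolding cc_cont_def g_def by blast
    hence "(\<lambda>u. ennreal (enn2real (g n u))) \<in> borel_measurable (restrict_space borel C)"
      by (intro measurable_compose[OF borel_measurable_continuous_on_restrict]) auto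
    moreover have "\<And>u. u \<in> space (restrict_space borel C) \<Longrightarrow> ennreal (enn2real (g n u)) = g n u"
      using gfin by (auto simp: space_restrict_space intro: ennreal_enn2real)
    ultimately show ?thesis by (rule measurable_cong[THEN iffD1, rotated])
  qed
  have eq: "emeasure (lam u) U = (SUP n. g n u)" if u: "u \<in> C" for u
  proof (rule antisym)
    have Ks: "range K \<subseteq> sets (lam u)" using S u K(2) by (auto intro!: borel_closed compact_imp_closed)
    have "emeasure (lam u) U = (SUP n. emeasure (lam u) (K n))"
      using SUP_emeasure_incseq[OF Ks K(1)] K(3) by simp
    also have "\<dots> \<le> (SUP n. g n u)"
    proof (intro SUP_mono)
      fix n show "\<exists>m\<in>UNIV. emeasure (lam u) (K n) \<le> g m u"
      proof
        have "emeasure (lam u) (K n) = (\<integral>\<^sup>+ x. indicator (K n) x \<partial>lam u)" using Ks by simp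
        also have "\<dots> \<le> g n u" unfolding g_def
          using \<phi> by (intro nn_integral_mono) (auto simp: indicator_def)
        finally show "emeasure (lam u) (K n) \<le> g n u" .
      qed simp
    qed
    finally show "emeasure (lam u) U \<le> (SUP n. g n u)" .
    have Us: "U \<in> sets (lam u)" using S u U by auto
    show "(SUP n. g n u) \<le> emeasure (lam u) U"
    proof (intro SUP_least)
      fix n
      have "g n u \<le> (\<integral>\<^sup>+ x. indicator U x \<partial>lam u)" unfolding g_def
        using \<phi> by (intro nn_integral_mono) (auto simp: indicator_def)
      also have "\<dots> = emeasure (lam u) U" using Us by simp
      finally show "g n u \<le> emeasure (lam u) U" .
    qed
  qed
  have "(\<lambda>u. SUP n. g n u) \<in> borel_measurable (restrict_space borel C)"
    using gm by measurable
  then show ?thesis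
    by (rule measurable_cong[THEN iffD1, rotated]) (auto simp: space_restrict_space eq)
qed

lemma hm_borel_W:
  fixes lam :: "'a::{second_countable_topology,t2_space} \<Rightarrow> 'b::{second_countable_topology,t2_space} measure"
  assumes LC: "locally compact (UNIV :: 'b set)" and S: "\<forall>u\<in>C. sets (lam u) = sets borel"
    and CC: "cc_cont lam C" and W: "open W" and fin: "\<forall>u\<in>C. emeasure (lam u) W < \<infinity>"
    and E: "E \<in> sets borel"
  shows "(\<lambda>u. emeasure (lam u) (E \<inter> W)) \<in> borel_measurable (restrict_space borel C)"
proof -
  have "Int_stable {S::'b set. open S}" unfolding Int_stable_def by auto
  moreover have "{S::'b set. open S} \<subseteq> Pow UNIV" by auto
  moreover have "E \<in> sigma_sets UNIV {S. open S}" using E unfolding sets_borel .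
  ultimately show ?thesis
  proof (induction rule: sigma_sets_induct_disjoint)
    case (basic A)
    then show ?case using hm_open[OF LC S CC, of "A \<inter> W"] W by auto
  next
    case empty
    then show ?case by simp
  next
    case (compl A)
    have Ab: "A \<in> sets borel" unfolding sets_borel using compl(1) .
    have "(\<lambda>u. emeasure (lam u) W - emeasure (lam u) (A \<inter> W)) \<in> borel_measurable (restrict_space borel C)"
      using hm_open[OF LC S CC W] compl(2) by measurable
    moreover have "emeasure (lam u) W - emeasure (lam u) (A \<inter> W) = emeasure (lam u) ((UNIV - A) \<inter> W)"
      if u: "u \<in> C" for u
    proof -
      have "(UNIV - A) \<inter> W = W - (A \<inter> W)" by blast
      moreover have "emeasure (lam u) (A \<inter> W) \<noteq> \<infinity>"
        using fin u emeasure_mono[of "A \<inter> W" W "lam u"] W S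
        by (metis (no_types, lifting) borel_open infinity_ennreal_def inf_le2 not_le top.extremum_uniqueI)
      ultimately show ?thesis using S u Ab W by (simp add: emeasure_Diff)
    qed
    ultimately show ?case
      by (rule measurable_cong[THEN iffD1, rotated]) (auto simp: space_restrict_space)
  next
    case (union A)
    have Ab: "\<And>i. A i \<in> sets borel" unfolding sets_borel using union(2) by auto
    have "(\<lambda>u. \<Sum>i. emeasure (lam u) (A i \<inter> W)) \<in> borel_measurable (restrict_space borel C)"
      using union(3) by measurable
    moreover have "(\<Sum>i. emeasure (lam u) (A i \<inter> W)) = emeasure (lam u) ((\<Union>i. A i) \<inter> W)"
      if u: "u \<in> C" for u
    proof -
      have "(\<Sum>i. emeasure (lam u) (A i \<inter> W)) = emeasure (lam u) (\<Union>i. A i \<inter> W)"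
        using S u Ab W union(1)
        by (intro suminf_emeasure) (auto simp: disjoint_family_on_def, blast)
      then show ?thesis by simp
    qed
    ultimately show ?case
      by (rule measurable_cong[THEN iffD1, rotated]) (auto simp: space_restrict_space)
  qed
qed

lemma hm_borel:
  fixes lam :: "'a::{second_countable_topology,t2_space} \<Rightarrow> 'b::{second_countable_topology,t2_space} measure"
  assumes LC: "locally compact (UNIV :: 'b set)" and S: "\<forall>u\<in>C. sets (lam u) = sets borel"
    and CC: "cc_cont lam C" and E: "E \<in> sets borel"
  shows "(\<lambda>u. emeasure (lam u) E) \<in> borel_measurable (restrict_space borel C)"
proof -
  obtain W :: "nat \<Rightarrow> 'b set" where W: "incseq W" "\<And>n. open (W n)" "\<And>n. compact (closure (W n))" "(\<Union>n. W n) = UNIV"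
    using exhaustion[OF LC] by blast
  have fin: "\<forall>u\<in>C. emeasure (lam u) (W n) < \<infinity>" for n
  proof
    fix u assume u: "u \<in> C"
    have "emeasure (lam u) (W n) \<le> emeasure (lam u) (closure (W n))"
      using S u by (intro emeasure_mono closure_subset) auto
    also have "\<dots> < \<infinity>" using hm_compact_finite[OF LC S CC W(3) u] .
    finally show "emeasure (lam u) (W n) < \<infinity>" .
  qed
  have "(\<lambda>u. SUP n. emeasure (lam u) (E \<inter> W n)) \<in> borel_measurable (restrict_space borel C)"
    using hm_borel_W[OF LC S CC W(2) fin E] by measurable
  moreover have "(SUP n. emeasure (lam u) (E \<inter> W n)) = emeasure (lam u) E" if u: "u \<in> C" for u
  proof -
    have "(SUP n. emeasure (lam u) (E \<inter> W n)) = emeasure (lam u) (\<Union>n. E \<inter> W n)"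
    proof (rule SUP_emeasure_incseq)
      show "range (\<lambda>n. E \<inter> W n) \<subseteq> sets (lam u)" using S u E W(2) by auto
      show "incseq (\<lambda>n. E \<inter> W n)" using W(1) unfolding incseq_def by blast
    qed
    also have "(\<Union>n. E \<inter> W n) = E" using W(4) by blast
    finally show ?thesis .
  qed
  ultimately show ?thesis
    by (rule measurable_cong[THEN iffD1, rotated]) (auto simp: space_restrict_space)
qed

locale kern =
  fixes N :: "'y::topological_space \<Rightarrow> 'a::topological_space measure" and C :: "'y set"
    and D :: "nat \<Rightarrow> 'a set"
  assumes NS: "\<And>y. y \<in> C \<Longrightarrow> sets (N y) = sets borel"
    and NM: "\<And>E. E \<in> sets borel \<Longrightarrow> (\<lambda>y. emeasure (N y) E * indicator C y) \<in> borel_measurable borel"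
    and Dinc: "incseq D" and Dsets: "\<And>n. D n \<in> sets borel" and Dcov: "(\<Union>n. D n) = UNIV"
    and Dfin: "\<And>y n. y \<in> C \<Longrightarrow> emeasure (N y) (D n) < \<infinity>"
begin

lemma meas_slice:
  fixes g :: "'x::topological_space \<times> 'a \<Rightarrow> ennreal"
  assumes g: "g \<in> borel_measurable (borel \<Otimes>\<^sub>M borel)" and y: "y \<in> C"
  shows "(\<lambda>a. g (x, a)) \<in> borel_measurable (N y)"
proof -
  have "(\<lambda>a. g (x, a)) \<in> borel_measurable borel" using g by measurable
  then show ?thesis using NS[OF y] by (simp cong: measurable_cong_sets)
qed

lemma ker_sets_D:
  assumes Z: "Z \<in> sets (borel \<Otimes>\<^sub>M borel :: ('x::topological_space \<times> 'a) measure)"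
  shows "(\<lambda>z::'x \<times> 'y. emeasure (N (snd z)) (Pair (fst z) -` Z \<inter> D n) * indicator C (snd z))
           \<in> borel_measurable (borel \<Otimes>\<^sub>M borel)"
proof -
  have "Int_stable {a \<times> b | a b. a \<in> sets (borel :: 'x measure) \<and> b \<in> sets (borel :: 'a measure)}"
    by (rule Int_stable_pair_measure_generator)
  moreover have "{a \<times> b | a b. a \<in> sets (borel :: 'x measure) \<and> b \<in> sets (borel :: 'a measure)} \<subseteq> Pow (UNIV \<times> UNIV)"
    by auto
  moreover have "Z \<in> sigma_sets (UNIV \<times> UNIV) {a \<times> b | a b. a \<in> sets (borel :: 'x measure) \<and> b \<in> sets (borel :: 'a measure)}"
    using Z by (simp add: sets_pair_measure)
  ultimately show ?thesis
  proof (induction rule: sigma_sets_induct_disjoint)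
    case (basic Z)
    then obtain a b where Z: "Z = a \<times> b" "a \<in> sets borel" "b \<in> sets borel" by blast
    have m: "(\<lambda>z::'x \<times> 'y. indicator a (fst z) * (emeasure (N (snd z)) (b \<inter> D n) * indicator C (snd z)))
      \<in> borel_measurable (borel \<Otimes>\<^sub>M borel)"
    proof -
      have "(\<lambda>y. emeasure (N y) (b \<inter> D n) * indicator C y) \<in> borel_measurable borel"
        using NM Z(3) Dsets by auto
      then show ?thesis using Z(2) by measurable
    qed
    show ?case
      by (rule measurable_cong[THEN iffD2, OF _ m]) (auto simp: Z indicator_def)
  next
    case empty
    then show ?case by simp
  next
    case (compl Z)
    have Zs: "Z \<in> sets (borel \<Otimes>\<^sub>M borel :: ('x \<times> 'a) measure)"
      using compl(1) by (simp add: sets_pair_measure)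
    have m: "(\<lambda>z::'x \<times> 'y. emeasure (N (snd z)) (D n) * indicator C (snd z) -
       emeasure (N (snd z)) (Pair (fst z) -` Z \<inter> D n) * indicator C (snd z)) \<in> borel_measurable (borel \<Otimes>\<^sub>M borel)"
    proof -
      have "(\<lambda>y. emeasure (N y) (D n) * indicator C y) \<in> borel_measurable borel" using NM Dsets by auto
      then show ?thesis using compl(2) by measurable
    qed
    show ?case
    proof (rule measurable_cong[THEN iffD2, OF _ m])
      fix z :: "'x \<times> 'y"
      obtain x y where z: "z = (x, y)" by (cases z)
      have "emeasure (N y) (D n) * indicator C y - emeasure (N y) (Pair x -` Z \<inter> D n) * indicator C y =
            emeasure (N y) (Pair x -` (UNIV \<times> UNIV - Z) \<inter> D n) * indicator C y"
      proof (cases "y \<in> C")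
        case True
        have s1: "Pair x -` Z \<inter> D n \<in> sets (N y)"
          using NS[OF True] Zs Dsets by (auto intro: sets_Pair1)
        have s2: "D n \<in> sets (N y)" using NS[OF True] Dsets by auto
        have "emeasure (N y) (Pair x -` Z \<inter> D n) \<le> emeasure (N y) (D n)"
          using s2 by (intro emeasure_mono) auto
        hence fin: "emeasure (N y) (Pair x -` Z \<inter> D n) \<noteq> \<infinity>"
          using Dfin[OF True, of n] by (auto simp: top_unique)
        have "Pair x -` (UNIV \<times> UNIV - Z) \<inter> D n = D n - (Pair x -` Z \<inter> D n)" by auto
        then show ?thesis using True fin s1 s2 by (simp add: emeasure_Diff)
      qed simp
      then show "emeasure (N (snd z)) (Pair (fst z) -` (UNIV \<times> UNIV - Z) \<inter> D n) * indicator C (snd z) =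
         emeasure (N (snd z)) (D n) * indicator C (snd z) - emeasure (N (snd z)) (Pair (fst z) -` Z \<inter> D n) * indicator C (snd z)"
        by (simp add: z)
    qed
  next
    case (union A)
    have As: "\<And>i. A i \<in> sets (borel \<Otimes>\<^sub>M borel :: ('x \<times> 'a) measure)"
      using union(2) by (auto simp: sets_pair_measure)
    have m: "(\<lambda>z::'x \<times> 'y. \<Sum>i. emeasure (N (snd z)) (Pair (fst z) -` A i \<inter> D n) * indicator C (snd z))
       \<in> borel_measurable (borel \<Otimes>\<^sub>M borel)"
      using union(3) by measurable
    show ?case
    proof (rule measurable_cong[THEN iffD2, OF _ m])
      fix z :: "'x \<times> 'y"
      obtain x y where z: "z = (x, y)" by (cases z)
      have "(\<Sum>i. emeasure (N y) (Pair x -` A i \<inter> D n) * indicator C y) =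
            emeasure (N y) (Pair x -` (\<Union>i. A i) \<inter> D n) * indicator C y"
      proof (cases "y \<in> C")
        case True
        have "(\<Sum>i. emeasure (N y) (Pair x -` A i \<inter> D n)) = emeasure (N y) (\<Union>i. Pair x -` A i \<inter> D n)"
          using NS[OF True] As Dsets union(1)
          by (intro suminf_emeasure) (auto intro: sets_Pair1 simp: disjoint_family_on_def, blast)
        moreover have "(\<Union>i. Pair x -` A i \<inter> D n) = Pair x -` (\<Union>i. A i) \<inter> D n" by auto
        ultimately show ?thesis using True by simp
      qed simp
      then show "emeasure (N (snd z)) (Pair (fst z) -` (\<Union>i. A i) \<inter> D n) * indicator C (snd z) =
          (\<Sum>i. emeasure (N (snd z)) (Pair (fst z) -` A i \<inter> D n) * indicator C (snd z))"
        by (simp add: z)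
    qed
  qed
qed

lemma ker_sets:
  assumes Z: "Z \<in> sets (borel \<Otimes>\<^sub>M borel :: ('x::topological_space \<times> 'a) measure)"
  shows "(\<lambda>z::'x \<times> 'y. emeasure (N (snd z)) (Pair (fst z) -` Z) * indicator C (snd z))
           \<in> borel_measurable (borel \<Otimes>\<^sub>M borel)"
proof -
  have m: "(\<lambda>z::'x \<times> 'y. SUP n. emeasure (N (snd z)) (Pair (fst z) -` Z \<inter> D n) * indicator C (snd z))
           \<in> borel_measurable (borel \<Otimes>\<^sub>M borel)"
    using ker_sets_D[OF Z] by measurable
  show ?thesis
  proof (rule measurable_cong[THEN iffD2, OF _ m])
    fix z :: "'x \<times> 'y"
    obtain x y where z: "z = (x, y)" by (cases z)
    have "(SUP n. emeasure (N y) (Pair x -` Z \<inter> D n) * indicator C y) = emeasure (N y) (Pair x -` Z) * indicator C y"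
    proof (cases "y \<in> C")
      case True
      have "(SUP n. emeasure (N y) (Pair x -` Z \<inter> D n)) = emeasure (N y) (\<Union>n. Pair x -` Z \<inter> D n)"
      proof (rule SUP_emeasure_incseq)
        show "range (\<lambda>n. Pair x -` Z \<inter> D n) \<subseteq> sets (N y)"
          using NS[OF True] Z Dsets by (auto intro: sets_Pair1)
        show "incseq (\<lambda>n. Pair x -` Z \<inter> D n)" using Dinc unfolding incseq_def by blast
      qed
      moreover have "(\<Union>n. Pair x -` Z \<inter> D n) = Pair x -` Z" using Dcov by blast
      ultimately show ?thesis using True by simp
    qed simp
    then show "emeasure (N (snd z)) (Pair (fst z) -` Z) * indicator C (snd z) =
      (SUP n. emeasure (N (snd z)) (Pair (fst z) -` Z \<inter> D n) * indicator C (snd z))" by (simp add: z)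
  qed
qed

lemma ker_fun:
  fixes g :: "'x::topological_space \<times> 'a \<Rightarrow> ennreal"
  assumes g: "g \<in> borel_measurable (borel \<Otimes>\<^sub>M borel)"
  shows "(\<lambda>z::'x \<times> 'y. (\<integral>\<^sup>+ a. g (fst z, a) \<partial>N (snd z)) * indicator C (snd z)) \<in> borel_measurable (borel \<Otimes>\<^sub>M borel)"
  using g
proof (induction rule: borel_measurable_induct)
  case (cong f g)
  have "f = g" using cong(3) by (auto simp: space_pair_measure)
  then show ?case using cong(4) by simp
next
  case (set A)
  have m: "(\<lambda>z::'x \<times> 'y. emeasure (N (snd z)) (Pair (fst z) -` A) * indicator C (snd z)) \<in> borel_measurable (borel \<Otimes>\<^sub>M borel)"
    using ker_sets[OF set] .
  show ?case
  proof (rule measurable_cong[THEN iffD2, OF _ m])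
    fix z :: "'x \<times> 'y"
    obtain x y where z: "z = (x, y)" by (cases z)
    have "(\<integral>\<^sup>+ a. indicator A (x, a) \<partial>N y) * indicator C y = emeasure (N y) (Pair x -` A) * indicator C y"
    proof (cases "y \<in> C")
      case True
      have "Pair x -` A \<in> sets (N y)" using NS[OF True] set by (auto intro: sets_Pair1)
      moreover have "(\<lambda>a. indicator A (x, a) :: ennreal) = indicator (Pair x -` A)"
        by (auto simp: indicator_def)
      ultimately show ?thesis by simp
    qed simp
    then show "(\<integral>\<^sup>+ a. indicator A (fst z, a) \<partial>N (snd z)) * indicator C (snd z) =
      emeasure (N (snd z)) (Pair (fst z) -` A) * indicator C (snd z)" by (simp add: z)
  qed
next
  case (mult u c)
  have m: "(\<lambda>z::'x \<times> 'y. c * ((\<integral>\<^sup>+ a. u (fst z, a) \<partial>N (snd z)) * indicator C (snd z))) \<in> borel_measurable (borel \<Otimes>\<^sub>M borel)"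
    using mult(4) by measurable
  show ?case
  proof (rule measurable_cong[THEN iffD2, OF _ m])
    fix z :: "'x \<times> 'y"
    obtain x y where z: "z = (x, y)" by (cases z)
    have "(\<integral>\<^sup>+ a. c * u (x, a) \<partial>N y) * indicator C y = c * ((\<integral>\<^sup>+ a. u (x, a) \<partial>N y) * indicator C y)"
    proof (cases "y \<in> C")
      case True
      show ?thesis using meas_slice[OF mult(2) True] by (simp add: nn_integral_cmult mult.assoc)
    qed simp
    then show "(\<integral>\<^sup>+ a. c * u (fst z, a) \<partial>N (snd z)) * indicator C (snd z) =
      c * ((\<integral>\<^sup>+ a. u (fst z, a) \<partial>N (snd z)) * indicator C (snd z))" by (simp add: z)
  qed
next
  case (add u v)
  have m: "(\<lambda>z::'x \<times> 'y. (\<integral>\<^sup>+ a. v (fst z, a) \<partial>N (snd z)) * indicator C (snd z) +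
       (\<integral>\<^sup>+ a. u (fst z, a) \<partial>N (snd z)) * indicator C (snd z)) \<in> borel_measurable (borel \<Otimes>\<^sub>M borel)"
    apply (rule borel_measurable_add) using add by blast+
  show ?case
  proof (rule measurable_cong[THEN iffD2, OF _ m])
    fix z :: "'x \<times> 'y"
    obtain x y where z: "z = (x, y)" by (cases z)
    have "(\<integral>\<^sup>+ a. v (x, a) + u (x, a) \<partial>N y) * indicator C y =
       (\<integral>\<^sup>+ a. v (x, a) \<partial>N y) * indicator C y + (\<integral>\<^sup>+ a. u (x, a) \<partial>N y) * indicator C y"
    proof (cases "y \<in> C")
      case True
      show ?thesis using meas_slice[OF \<open>u \<in> borel_measurable (borel \<Otimes>\<^sub>M borel)\<close> True] meas_slice[OF \<open>v \<in> borel_measurable (borel \<Otimes>\<^sub>M borel)\<close> True]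
        by (simp add: nn_integral_add distrib_right)
    qed simp
    then show "(\<integral>\<^sup>+ a. v (fst z, a) + u (fst z, a) \<partial>N (snd z)) * indicator C (snd z) =
       (\<integral>\<^sup>+ a. v (fst z, a) \<partial>N (snd z)) * indicator C (snd z) + (\<integral>\<^sup>+ a. u (fst z, a) \<partial>N (snd z)) * indicator C (snd z)"
      by (simp add: z)
  qed
next
  case (seq U)
  have m: "(\<lambda>z::'x \<times> 'y. SUP i. (\<integral>\<^sup>+ a. U i (fst z, a) \<partial>N (snd z)) * indicator C (snd z)) \<in> borel_measurable (borel \<Otimes>\<^sub>M borel)"
    apply (rule borel_measurable_SUP) using seq by auto
  show ?case
  proof (rule measurable_cong[THEN iffD2, OF _ m])
    fix z :: "'x \<times> 'y"
    obtain x y where z: "z = (x, y)" by (cases z)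
    have "(\<integral>\<^sup>+ a. (SUP i. U i) (x, a) \<partial>N y) * indicator C y =
       (SUP i. (\<integral>\<^sup>+ a. U i (x, a) \<partial>N y) * indicator C y)"
    proof (cases "y \<in> C")
      case True
      have "(\<integral>\<^sup>+ a. (SUP i. U i (x, a)) \<partial>N y) = (SUP i. (\<integral>\<^sup>+ a. U i (x, a) \<partial>N y))"
      proof (rule nn_integral_monotone_convergence_SUP)
        show "incseq (\<lambda>i a. U i (x, a))" using \<open>incseq U\<close> unfolding incseq_def le_fun_def by blast
        show "\<And>i. (\<lambda>a. U i (x, a)) \<in> borel_measurable (N y)" using meas_slice[OF seq(1) True] .
      qed
      then show ?thesis using True by (simp add: image_comp)
    qed simp
    then show "(\<integral>\<^sup>+ a. (SUP i. U i) (fst z, a) \<partial>N (snd z)) * indicator C (snd z) =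
       (SUP i. (\<integral>\<^sup>+ a. U i (fst z, a) \<partial>N (snd z)) * indicator C (snd z))" by (simp add: z)
  qed
qed

end

lemma (in kern) sf: "y \<in> C \<Longrightarrow> sigma_finite_measure (N y)"
proof -
  assume y: "y \<in> C"
  have sp: "space (N y) = UNIV" using sets_eq_imp_space_eq[OF NS[OF y]] by simp
  show ?thesis
  proof (unfold_locales, intro exI[of _ "range D"] conjI)
    show "countable (range D)" by simp
    show "range D \<subseteq> sets (N y)" using NS[OF y] Dsets by auto
    show "\<Union> (range D) = space (N y)" using Dcov sp by simp
    show "\<forall>a\<in>range D. emeasure (N y) a \<noteq> \<infinity>" using Dfin[OF y] by (auto simp: less_top)
  qed
qed

lemma groupoid_cont:
  assumes "top_groupoid H"
  shows "continuous_on UNIV (rg H)" "continuous_on UNIV (dm H)"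
proof -
  have g: "groupoid H" and m: "continuous_on {(x, y). dm H x = rg H y} (\<lambda>(x, y). mul H x y)"
    and i: "continuous_on UNIV (iv H)" using assms unfolding top_groupoid_def by auto
  have ax: "\<And>x. mul H x (iv H x) = rg H x" "\<And>x. rg H (iv H x) = dm H x"
    using g unfolding groupoid_def by auto
  have "continuous_on UNIV (\<lambda>x. (\<lambda>(x, y). mul H x y) (x, iv H x))"
    by (rule continuous_on_compose2[OF m]) (auto intro!: continuous_intros i simp: ax)
  then show c: "continuous_on UNIV (rg H)" by (simp add: ax)
  have "continuous_on UNIV (\<lambda>x. rg H (iv H x))"
    by (rule continuous_on_compose2[OF c i]) auto
  then show "continuous_on UNIV (dm H)" by (simp add: ax)
qed

lemma units_eq:
  assumes "top_groupoid H" shows "units H = {x. rg H x = x}"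
proof -
  have g: "groupoid H" using assms unfolding top_groupoid_def by auto
  then have rr: "\<And>x. rg H (rg H x) = rg H x" unfolding groupoid_def by blast
  show ?thesis unfolding units_def
  proof (intro set_eqI iffI)
    fix x assume "x \<in> range (rg H)"
    then obtain y where "x = rg H y" by blast
    then show "x \<in> {x. rg H x = x}" using rr by simp
  next
    fix x assume "x \<in> {x. rg H x = x}"
    then have "x = rg H x" by simp
    then show "x \<in> range (rg H)" by (metis rangeI)
  qed
qed

lemma units_closed:
  fixes H :: "('a::{second_countable_topology,t2_space}, 'b) hgpd_scheme"
  assumes "top_groupoid H" shows "closed (units H)"
  using units_eq[OF assms] closed_Collect_eq[OF groupoid_cont(1)[OF assms] continuous_on_id] by simp

lemma units_borel:
  fixes H :: "('a::{second_countable_topology,t2_space}, 'b) hgpd_scheme"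
  assumes "top_groupoid H" shows "units H \<in> sets borel"
  using units_closed[OF assms] by simp

lemma rg_units: "rg H x \<in> units H" and dm_units: "groupoid H \<Longrightarrow> dm H x \<in> units H"
proof -
  show "rg H x \<in> units H" unfolding units_def by simp
  assume "groupoid H"
  then have "rg H (dm H x) = dm H x" unfolding groupoid_def by auto
  then show "dm H x \<in> units H" unfolding units_def by (metis rangeI)
qed

lemma haar_kern:
  fixes H :: "('a::{second_countable_topology,t2_space}, 'b) hgpd_scheme"
  assumes "haar_groupoid H"
  shows "\<exists>D. kern (haar H) (units H) D"
proof -
  have tg: "top_groupoid H" and hs: "haar_system H" using assms unfolding haar_groupoid_def by auto
  have LC: "locally compact (UNIV :: 'a set)" using tg unfolding top_groupoid_def by auto
  have S: "\<forall>u\<in>units H. sets (haar H u) = sets borel" using hs unfolding haar_system_def by (elim conjE) assumption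
  have CC: "cc_cont (haar H) (units H)" using hs unfolding haar_system_def cc_cont_def by (elim conjE) assumption
  obtain W :: "nat \<Rightarrow> 'a set" where W: "incseq W" "\<And>n. open (W n)" "\<And>n. compact (closure (W n))" "(\<Union>n. W n) = UNIV"
    using exhaustion[OF LC] by blast
  show ?thesis
  proof (intro exI[of _ W] kern.intro)
    show "\<And>y. y \<in> units H \<Longrightarrow> sets (haar H y) = sets borel" using S by auto
    show "(\<lambda>y. emeasure (haar H y) E * indicator (units H) y) \<in> borel_measurable borel" if "E \<in> sets borel" for E
      by (rule borel_measurable_restrict_space_iff_ennreal[THEN iffD1, OF _ hm_borel[OF LC S CC that]])
        (simp add: units_borel[OF tg])
    show "incseq W" "\<And>n. W n \<in> sets borel" "(\<Union>n. W n) = UNIV" using W by auto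
    show "emeasure (haar H y) (W n) < \<infinity>" if y: "y \<in> units H" for y n
    proof -
      have "emeasure (haar H y) (W n) \<le> emeasure (haar H y) (closure (W n))"
        using S y by (intro emeasure_mono closure_subset) auto
      also have "\<dots> < \<infinity>" using hm_compact_finite[OF LC S CC W(3) y] .
      finally show ?thesis .
    qed
  qed
qed

lemma bsm_kern:
  fixes S :: "('s::{second_countable_topology,t2_space}, 'a) hgpd_scheme"
    and G :: "('g::{second_countable_topology,t2_space}, 'b) hgpd_scheme"
  assumes tS: "top_groupoid S" and tG: "top_groupoid G"
    and b: "bsm (units S) (units G) p \<gamma>" and lf: "loc_finite_bsm (units S) (units G) \<gamma>"
    and pc: "continuous_on UNIV p"
  shows "\<exists>D. kern \<gamma> (units G) D"
proof -
  have LC: "locally compact (UNIV :: 's set)" using tS unfolding top_groupoid_def by auto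
  obtain K :: "nat \<Rightarrow> 's set" where K: "incseq K" "\<And>n. compact (K n)" "(\<Union>n. K n) = UNIV"
    using sigma_compact_open[OF LC open_UNIV] by blast
  define D where "D n = (K n \<inter> units S) \<union> - units S" for n
  have us: "units S \<in> sets borel" using units_borel[OF tS] .
  have bs: "\<And>y. y \<in> units G \<Longrightarrow> sets (\<gamma> y) = sets borel"
    and b0: "\<And>y. y \<in> units G \<Longrightarrow> emeasure (\<gamma> y) (- (units S \<inter> p -` {y})) = 0"
    and bm: "\<And>E. E \<in> sets borel \<Longrightarrow> (\<lambda>y. emeasure (\<gamma> y) E) \<in> borel_measurable (restrict_space borel (units G))"
    using b unfolding bsm_def by blast+
  show ?thesis
  proof (intro exI[of _ D] kern.intro)
    show "\<And>y. y \<in> units G \<Longrightarrow> sets (\<gamma> y) = sets borel" by (rule bs)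
    show "(\<lambda>y. emeasure (\<gamma> y) E * indicator (units G) y) \<in> borel_measurable borel" if "E \<in> sets borel" for E
      by (rule borel_measurable_restrict_space_iff_ennreal[THEN iffD1, OF _ bm[OF that]])
        (simp add: units_borel[OF tG])
    show "incseq D" using K(1) unfolding D_def incseq_def by blast
    have "K n \<in> sets borel" for n by (intro borel_closed compact_imp_closed K(2))
    then show "\<And>n. D n \<in> sets borel" unfolding D_def using us by auto
    show "(\<Union>n. D n) = UNIV" using K(3) unfolding D_def by blast
    show "emeasure (\<gamma> y) (D n) < \<infinity>" if y: "y \<in> units G" for y n
    proof -
      have c: "compact (K n \<inter> units S)" using compact_Int_closed[OF K(2) units_closed[OF tS]] .
      have s1: "K n \<inter> units S \<in> sets (\<gamma> y)" using bs[OF y] c by (auto intro!: borel_closed compact_imp_closed)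
      have s2: "- units S \<in> sets (\<gamma> y)" using bs[OF y] us by auto
      have "emeasure (\<gamma> y) (- units S) \<le> emeasure (\<gamma> y) (- (units S \<inter> p -` {y}))"
      proof (rule emeasure_mono)
        have "closed (p -` {y})" by (rule closed_vimage[OF closed_singleton pc])
        then show "- (units S \<inter> p -` {y}) \<in> sets (\<gamma> y)" using bs[OF y] us by auto
      qed auto
      hence z: "emeasure (\<gamma> y) (- units S) = 0" using b0[OF y] by simp
      have "emeasure (\<gamma> y) (D n) \<le> emeasure (\<gamma> y) (K n \<inter> units S) + emeasure (\<gamma> y) (- units S)"
        unfolding D_def using s1 s2 by (rule emeasure_subadditive)
      also have "\<dots> = emeasure (\<gamma> y) (K n \<inter> units S)" using z by simp
      also have "\<dots> < \<infinity>" using lf y c unfolding loc_finite_bsm_def by blast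
      finally show ?thesis .
    qed
  qed
qed

lemma triple_int:
  fixes A :: "'s::second_countable_topology measure" and B :: "'t::second_countable_topology measure"
    and g :: "'g::second_countable_topology"
  assumes sA: "sets A = sets borel" and sB: "sets B = sets borel"
    and fA: "sigma_finite_measure A" and fB: "sigma_finite_measure B"
    and h: "h \<in> borel_measurable (borel :: ('s \<times> 'g \<times> 't) measure)"
  shows "(\<integral>\<^sup>+ z. h z \<partial>(A \<Otimes>\<^sub>M (return borel g \<Otimes>\<^sub>M B))) = (\<integral>\<^sup>+ s. (\<integral>\<^sup>+ t. h (s, g, t) \<partial>B) \<partial>A)"
proof -
  interpret B: sigma_finite_measure B by (rule fB)
  interpret R: prob_space "return borel g" by (rule prob_space_return) simp
  interpret RB: pair_sigma_finite "return borel g" B by unfold_locales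
  have eq2: "sets (return borel g \<Otimes>\<^sub>M B) = sets (borel :: ('g \<times> 't) measure)"
  proof -
    have "sets (return borel g \<Otimes>\<^sub>M B) = sets (borel \<Otimes>\<^sub>M (borel :: 't measure))"
      by (rule sets_pair_measure_cong) (simp_all add: sB)
    also have "(borel \<Otimes>\<^sub>M (borel :: 't measure)) = (borel :: ('g \<times> 't) measure)" by (rule borel_prod)
    finally show ?thesis .
  qed
  have eq: "sets (A \<Otimes>\<^sub>M (return borel g \<Otimes>\<^sub>M B)) = sets (borel :: ('s \<times> 'g \<times> 't) measure)"
  proof -
    have "sets (A \<Otimes>\<^sub>M (return borel g \<Otimes>\<^sub>M B)) = sets (borel \<Otimes>\<^sub>M (borel :: ('g \<times> 't) measure))"
      by (rule sets_pair_measure_cong[OF sA eq2])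
    also have "(borel \<Otimes>\<^sub>M (borel :: ('g \<times> 't) measure)) = (borel :: ('s \<times> 'g \<times> 't) measure)" by (rule borel_prod)
    finally show ?thesis .
  qed
  have h': "h \<in> borel_measurable (A \<Otimes>\<^sub>M (return borel g \<Otimes>\<^sub>M B))"
    using h by (simp add: measurable_cong_sets[OF eq refl])
  have h2: "h \<in> borel_measurable (borel \<Otimes>\<^sub>M borel)" using h by (simp add: borel_prod)
  have "(\<integral>\<^sup>+ z. h z \<partial>(A \<Otimes>\<^sub>M (return borel g \<Otimes>\<^sub>M B))) =
        (\<integral>\<^sup>+ s. (\<integral>\<^sup>+ w. h (s, w) \<partial>(return borel g \<Otimes>\<^sub>M B)) \<partial>A)"
    using RB.P.nn_integral_fst[OF h'] by simp
  also have "\<dots> = (\<integral>\<^sup>+ s. (\<integral>\<^sup>+ t. h (s, g, t) \<partial>B) \<partial>A)"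
  proof (intro nn_integral_cong)
    fix s
    have hs: "(\<lambda>w. h (s, w)) \<in> borel_measurable (return borel g \<Otimes>\<^sub>M B)"
    proof -
      have "(\<lambda>w. h (s, w)) \<in> borel_measurable borel" using h2 by measurable
      then show ?thesis by (simp add: measurable_cong_sets[OF eq2 refl])
    qed
    have "(\<integral>\<^sup>+ w. h (s, w) \<partial>(return borel g \<Otimes>\<^sub>M B)) = (\<integral>\<^sup>+ x. (\<integral>\<^sup>+ t. h (s, x, t) \<partial>B) \<partial>return borel g)"
      using B.nn_integral_fst[OF hs] by simp
    also have "\<dots> = (\<integral>\<^sup>+ t. h (s, g, t) \<partial>B)"
      using B.borel_measurable_nn_integral_fst[OF hs] by (subst nn_integral_return) (auto)
    finally show "(\<integral>\<^sup>+ w. h (s, w) \<partial>(return borel g \<Otimes>\<^sub>M B)) = (\<integral>\<^sup>+ t. h (s, g, t) \<partial>B)" .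
  qed
  finally show ?thesis .
qed

lemma MO:
  fixes M :: "'y::topological_space measure" and N :: "'y \<Rightarrow> 'a::topological_space measure"
    and C :: "'y set" and F :: "'y \<Rightarrow> 'a set \<Rightarrow> ennreal" and f :: "'a \<Rightarrow> ennreal"
  assumes sM: "sets M = sets borel"
    and NS: "\<And>y. y \<in> C \<Longrightarrow> sets (N y) = sets borel"
    and NM: "\<And>E. E \<in> sets borel \<Longrightarrow> (\<lambda>y. emeasure (N y) E * indicator C y) \<in> borel_measurable borel"
    and FE: "\<And>E. E \<in> sets borel \<Longrightarrow> AE y in M. F y E = emeasure (N y) E * indicator C y"
    and f: "f \<in> borel_measurable borel"
  shows "(\<integral>\<^sup>+ a. f a \<partial>measure_of UNIV (sets borel) (\<lambda>E. \<integral>\<^sup>+ y. F y E \<partial>M)) =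
         (\<integral>\<^sup>+ y. (\<integral>\<^sup>+ a. f a \<partial>N y) * indicator C y \<partial>M)"
proof -
  define \<nu> where "\<nu> = measure_of UNIV (sets borel) (\<lambda>E. \<integral>\<^sup>+ y. F y E \<partial>M)"
  define \<mu>' where "\<mu>' E = (\<integral>\<^sup>+ y. emeasure (N y) E * indicator C y \<partial>M)" for E
  have NM': "\<And>E. E \<in> sets borel \<Longrightarrow> (\<lambda>y. emeasure (N y) E * indicator C y) \<in> borel_measurable M"
    using NM by (simp add: measurable_cong_sets[OF sM refl])
  have ss: "sigma_sets UNIV (sets borel) = (sets borel :: 'a set set)"
    using sets.sigma_sets_eq[of "borel :: 'a measure"] by simp
  have \<nu>eq: "\<nu> = measure_of UNIV (sets borel) \<mu>'"
    unfolding \<nu>_def \<mu>'_def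
  proof (rule measure_of_eq)
    fix a assume "a \<in> sigma_sets UNIV (sets (borel :: 'a measure))"
    then have a: "a \<in> sets borel" using ss by simp
    show "(\<integral>\<^sup>+ y. F y a \<partial>M) = (\<integral>\<^sup>+ y. emeasure (N y) a * indicator C y \<partial>M)"
      using FE[OF a] by (rule nn_integral_cong_AE)
  qed simp
  have sets\<nu>: "sets \<nu> = sets borel" unfolding \<nu>eq by (simp add: sets_measure_of_conv ss)
  have em: "emeasure \<nu> E = \<mu>' E" if E: "E \<in> sets borel" for E
    unfolding \<nu>eq
  proof (rule emeasure_measure_of_sigma)
    show "sigma_algebra UNIV (sets (borel :: 'a measure))"
      using sets.sigma_algebra_axioms[of "borel :: 'a measure"] by simp
    show "positive (sets borel) \<mu>'" unfolding positive_def \<mu>'_def by simp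
    show "countably_additive (sets borel) \<mu>'"
      unfolding countably_additive_def
    proof (intro allI impI)
      fix A :: "nat \<Rightarrow> 'a set"
      assume A: "range A \<subseteq> sets borel" "disjoint_family A" "\<Union> (range A) \<in> sets borel"
      have "(\<Sum>i. \<mu>' (A i)) = (\<integral>\<^sup>+ y. (\<Sum>i. emeasure (N y) (A i) * indicator C y) \<partial>M)"
        unfolding \<mu>'_def using A(1) NM' by (intro nn_integral_suminf[symmetric]) auto
      also have "\<dots> = \<mu>' (\<Union> (range A))"
        unfolding \<mu>'_def
      proof (intro nn_integral_cong)
        fix y
        show "(\<Sum>i. emeasure (N y) (A i) * indicator C y) = emeasure (N y) (\<Union> (range A)) * indicator C y"
        proof (cases "y \<in> C")
          case True
          have "(\<Sum>i. emeasure (N y) (A i)) = emeasure (N y) (\<Union> (range A))"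
            using A NS[OF True] by (intro suminf_emeasure) auto
          then show ?thesis using True by simp
        qed simp
      qed
      finally show "(\<Sum>i. \<mu>' (A i)) = \<mu>' (\<Union> (range A))" .
    qed
  qed (use E in simp)
  have "(\<integral>\<^sup>+ a. f a \<partial>\<nu>) = (\<integral>\<^sup>+ y. (\<integral>\<^sup>+ a. f a \<partial>N y) * indicator C y \<partial>M) \<and>
        (\<lambda>y. (\<integral>\<^sup>+ a. f a \<partial>N y) * indicator C y) \<in> borel_measurable M"
    using f
  proof (induction rule: borel_measurable_induct)
    case (cong f g)
    have "f = g" using cong(3) by auto
    then show ?case using cong(4) by simp
  next
    case (set A)
    have A\<nu>: "A \<in> sets \<nu>" using set sets\<nu> by simp
    have eqi: "(\<integral>\<^sup>+ a. indicator A a \<partial>N y) * indicator C y = emeasure (N y) A * indicator C y" for y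
      by (cases "y \<in> C") (auto simp: NS set)
    show ?case using A\<nu> em[OF set] NM'[OF set] by (simp add: eqi \<mu>'_def)
  next
    case (mult u c)
    have um: "u \<in> borel_measurable \<nu>" using mult(2) by (simp add: measurable_cong_sets[OF sets\<nu> refl])
    have eqi: "(\<integral>\<^sup>+ a. c * u a \<partial>N y) * indicator C y = c * ((\<integral>\<^sup>+ a. u a \<partial>N y) * indicator C y)" for y
    proof (cases "y \<in> C")
      case True
      have "u \<in> borel_measurable (N y)" using mult(2) by (simp add: measurable_cong_sets[OF NS[OF True] refl])
      then show ?thesis by (simp add: nn_integral_cmult mult.assoc)
    qed simp
    have "(\<integral>\<^sup>+ a. c * u a \<partial>\<nu>) = c * (\<integral>\<^sup>+ a. u a \<partial>\<nu>)" using um by (simp add: nn_integral_cmult)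
    also have "\<dots> = c * (\<integral>\<^sup>+ y. (\<integral>\<^sup>+ a. u a \<partial>N y) * indicator C y \<partial>M)" using mult(4) by simp
    also have "\<dots> = (\<integral>\<^sup>+ y. c * ((\<integral>\<^sup>+ a. u a \<partial>N y) * indicator C y) \<partial>M)"
      using mult(4) by (simp add: nn_integral_cmult)
    moreover have "(\<lambda>y. c * ((\<integral>\<^sup>+ a. u a \<partial>N y) * indicator C y)) \<in> borel_measurable M"
      apply (rule borel_measurable_times_ennreal[OF borel_measurable_const]) using mult(4) by auto
    ultimately show ?case by (simp add: eqi)
  next
    case (add u v)
    have um: "u \<in> borel_measurable \<nu>" using \<open>u \<in> borel_measurable borel\<close> by (simp add: measurable_cong_sets[OF sets\<nu> refl])
    have vm: "v \<in> borel_measurable \<nu>" using \<open>v \<in> borel_measurable borel\<close> by (simp add: measurable_cong_sets[OF sets\<nu> refl])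
    have eqi: "(\<integral>\<^sup>+ a. v a + u a \<partial>N y) * indicator C y =
       (\<integral>\<^sup>+ a. v a \<partial>N y) * indicator C y + (\<integral>\<^sup>+ a. u a \<partial>N y) * indicator C y" for y
    proof (cases "y \<in> C")
      case True
      have "u \<in> borel_measurable (N y)" "v \<in> borel_measurable (N y)"
        using \<open>u \<in> borel_measurable borel\<close> \<open>v \<in> borel_measurable borel\<close> by (simp_all add: measurable_cong_sets[OF NS[OF True] refl])
      then show ?thesis by (simp add: nn_integral_add distrib_right)
    qed simp
    have IHu: "(\<integral>\<^sup>+ a. u a \<partial>\<nu>) = (\<integral>\<^sup>+ y. (\<integral>\<^sup>+ a. u a \<partial>N y) * indicator C y \<partial>M)"
      "(\<lambda>y. (\<integral>\<^sup>+ a. u a \<partial>N y) * indicator C y) \<in> borel_measurable M" using add by auto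
    have IHv: "(\<integral>\<^sup>+ a. v a \<partial>\<nu>) = (\<integral>\<^sup>+ y. (\<integral>\<^sup>+ a. v a \<partial>N y) * indicator C y \<partial>M)"
      "(\<lambda>y. (\<integral>\<^sup>+ a. v a \<partial>N y) * indicator C y) \<in> borel_measurable M" using add by auto
    show ?case
      using um vm IHu IHv by (simp add: eqi nn_integral_add)
  next
    case (seq U)
    have IH1: "\<And>i. (\<integral>\<^sup>+ a. U i a \<partial>\<nu>) = (\<integral>\<^sup>+ y. (\<integral>\<^sup>+ a. U i a \<partial>N y) * indicator C y \<partial>M)"
      and IH2: "\<And>i. (\<lambda>y. (\<integral>\<^sup>+ a. U i a \<partial>N y) * indicator C y) \<in> borel_measurable M"
      using seq by auto
    have Um: "\<And>i. U i \<in> borel_measurable \<nu>" using seq(1) by (simp add: measurable_cong_sets[OF sets\<nu> refl])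
    have inc: "incseq (\<lambda>i y. (\<integral>\<^sup>+ a. U i a \<partial>N y) * indicator C y)"
    proof (intro incseq_SucI le_funI)
      fix i y
      show "(\<integral>\<^sup>+ a. U i a \<partial>N y) * indicator C y \<le> (\<integral>\<^sup>+ a. U (Suc i) a \<partial>N y) * indicator C y"
        using \<open>incseq U\<close> by (intro mult_right_mono nn_integral_mono) (auto simp: incseq_Suc_iff le_fun_def)
    qed
    have eqi: "(\<integral>\<^sup>+ a. (SUP i. U i) a \<partial>N y) * indicator C y = (SUP i. (\<integral>\<^sup>+ a. U i a \<partial>N y) * indicator C y)" for y
    proof (cases "y \<in> C")
      case True
      have "(\<integral>\<^sup>+ a. (SUP i. U i a) \<partial>N y) = (SUP i. (\<integral>\<^sup>+ a. U i a \<partial>N y))"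
        using seq(1) \<open>incseq U\<close>
        by (intro nn_integral_monotone_convergence_SUP) (simp_all add: measurable_cong_sets[OF NS[OF True] refl])
      then show ?thesis using True by (simp add: image_comp)
    qed simp
    have "(\<integral>\<^sup>+ a. (SUP i. U i) a \<partial>\<nu>) = (SUP i. (\<integral>\<^sup>+ a. U i a \<partial>\<nu>))"
      using Um \<open>incseq U\<close> by (simp add: image_comp nn_integral_monotone_convergence_SUP)
    also have "\<dots> = (SUP i. (\<integral>\<^sup>+ y. (\<integral>\<^sup>+ a. U i a \<partial>N y) * indicator C y \<partial>M))" using IH1 by simp
    also have "\<dots> = (\<integral>\<^sup>+ y. (SUP i. (\<integral>\<^sup>+ a. U i a \<partial>N y) * indicator C y) \<partial>M)"
      using IH2 inc by (intro nn_integral_monotone_convergence_SUP[symmetric]) auto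
    finally have calc: "(\<integral>\<^sup>+ a. (SUP i. U i) a \<partial>\<nu>) = (\<integral>\<^sup>+ y. (SUP i. (\<integral>\<^sup>+ a. U i a \<partial>N y) * indicator C y) \<partial>M)" .
    have meas: "(\<lambda>y. SUP i. (\<integral>\<^sup>+ a. U i a \<partial>N y) * indicator C y) \<in> borel_measurable M"
      using IH2 by measurable
    have eqf: "(\<lambda>y. (\<integral>\<^sup>+ a. (SUP i. U i) a \<partial>N y) * indicator C y) = (\<lambda>y. SUP i. (\<integral>\<^sup>+ a. U i a \<partial>N y) * indicator C y)"
      by (rule ext) (rule eqi)
    show ?case unfolding eqf using calc meas by blast
  qed
  then show ?thesis unfolding \<nu>_def by simp
qed

lemma sets_triple:
  fixes A :: "'s::second_countable_topology measure" and B :: "'t::second_countable_topology measure"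
    and g :: "'g::second_countable_topology"
  assumes sA: "sets A = sets borel" and sB: "sets B = sets borel"
  shows "sets (A \<Otimes>\<^sub>M (return borel g \<Otimes>\<^sub>M B)) = sets (borel :: ('s \<times> 'g \<times> 't) measure)"
proof -
  have eq2: "sets (return borel g \<Otimes>\<^sub>M B) = sets (borel :: ('g \<times> 't) measure)"
  proof -
    have "sets (return borel g \<Otimes>\<^sub>M B) = sets (borel \<Otimes>\<^sub>M (borel :: 't measure))"
      by (rule sets_pair_measure_cong) (simp_all add: sB)
    also have "(borel \<Otimes>\<^sub>M (borel :: 't measure)) = (borel :: ('g \<times> 't) measure)" by (rule borel_prod)
    finally show ?thesis .
  qed
  have "sets (A \<Otimes>\<^sub>M (return borel g \<Otimes>\<^sub>M B)) = sets (borel \<Otimes>\<^sub>M (borel :: ('g \<times> 't) measure))"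
    by (rule sets_pair_measure_cong[OF sA eq2])
  also have "(borel \<Otimes>\<^sub>M (borel :: ('g \<times> 't) measure)) = (borel :: ('s \<times> 'g \<times> 't) measure)" by (rule borel_prod)
  finally show ?thesis .
qed

lemma bsm_AE:
  assumes b: "bsm X Y \<pi> \<gamma>" and y: "y \<in> Y" and X: "X \<in> sets borel" and pi: "\<pi> -` {y} \<in> sets borel"
  shows "AE x in \<gamma> y. x \<in> X \<and> \<pi> x = y"
proof (rule AE_I')
  have s: "sets (\<gamma> y) = sets borel" and z: "emeasure (\<gamma> y) (- (X \<inter> \<pi> -` {y})) = 0"
    using b y unfolding bsm_def by blast+
  show "- (X \<inter> \<pi> -` {y}) \<in> null_sets (\<gamma> y)" using s z X pi by (auto simp: null_sets_def)
  show "{x \<in> space (\<gamma> y). \<not> (x \<in> X \<and> \<pi> x = y)} \<subseteq> - (X \<inter> \<pi> -` {y})" by auto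
qed

lemma two_kern:
  fixes N1 :: "'y1::second_countable_topology \<Rightarrow> 's::second_countable_topology measure"
    and N2 :: "'y2::second_countable_topology \<Rightarrow> 't::second_countable_topology measure"
    and h :: "'s \<times> 'g::second_countable_topology \<times> 't \<Rightarrow> ennreal"
  assumes k1: "kern N1 C1 D1" and k2: "kern N2 C2 D2"
    and h: "h \<in> borel_measurable borel"
  shows "(\<lambda>w::('g \<times> 'y2) \<times> 'y1. (\<integral>\<^sup>+ \<sigma>. (\<integral>\<^sup>+ \<tau>. h (\<sigma>, fst (fst w), \<tau>) \<partial>N2 (snd (fst w))) \<partial>N1 (snd w))
      * indicator C1 (snd w) * indicator C2 (snd (fst w))) \<in> borel_measurable borel"
proof -
  have h2: "(\<lambda>z::('s \<times> 'g) \<times> 't. h (fst (fst z), snd (fst z), snd z)) \<in> borel_measurable (borel \<Otimes>\<^sub>M borel)"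
  proof -
    have h': "h \<in> borel_measurable (borel \<Otimes>\<^sub>M (borel \<Otimes>\<^sub>M borel))" using h by (simp add: borel_prod)
    have \<phi>: "(\<lambda>z::('s \<times> 'g) \<times> 't. (fst (fst z), snd (fst z), snd z)) \<in> measurable ((borel \<Otimes>\<^sub>M borel) \<Otimes>\<^sub>M borel) (borel \<Otimes>\<^sub>M (borel \<Otimes>\<^sub>M borel))"
      by measurable
    show ?thesis using measurable_compose[OF \<phi> h'] by (simp add: borel_prod)
  qed
  have A: "(\<lambda>z::('s \<times> 'g) \<times> 'y2. (\<integral>\<^sup>+ \<tau>. h (fst (fst z), snd (fst z), \<tau>) \<partial>N2 (snd z)) * indicator C2 (snd z))
     \<in> borel_measurable (borel \<Otimes>\<^sub>M borel)"
    using kern.ker_fun[OF k2 h2] by simp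
  define A' where "A' z = (\<integral>\<^sup>+ \<tau>. h (fst (fst z), snd (fst z), \<tau>) \<partial>N2 (snd z)) * indicator C2 (snd z)" for z :: "('s \<times> 'g) \<times> 'y2"
  have A2: "(\<lambda>z::('g \<times> 'y2) \<times> 's. A' ((snd z, fst (fst z)), snd (fst z))) \<in> borel_measurable (borel \<Otimes>\<^sub>M borel)"
  proof -
    have "A' \<in> borel_measurable ((borel \<Otimes>\<^sub>M borel) \<Otimes>\<^sub>M borel)" using A unfolding A'_def by (simp add: borel_prod)
    then have "(\<lambda>z::('g \<times> 'y2) \<times> 's. A' ((snd z, fst (fst z)), snd (fst z))) \<in> borel_measurable ((borel \<Otimes>\<^sub>M borel) \<Otimes>\<^sub>M borel)"
      by measurable
    then show ?thesis by (simp add: borel_prod)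
  qed
  have B: "(\<lambda>w::('g \<times> 'y2) \<times> 'y1. (\<integral>\<^sup>+ \<sigma>. A' ((\<sigma>, fst (fst w)), snd (fst w)) \<partial>N1 (snd w)) * indicator C1 (snd w))
     \<in> borel_measurable (borel \<Otimes>\<^sub>M borel)"
    using kern.ker_fun[OF k1 A2] by simp
  have eq: "(\<integral>\<^sup>+ \<sigma>. A' ((\<sigma>, fst (fst w)), snd (fst w)) \<partial>N1 (snd w)) * indicator C1 (snd w) =
     (\<integral>\<^sup>+ \<sigma>. (\<integral>\<^sup>+ \<tau>. h (\<sigma>, fst (fst w), \<tau>) \<partial>N2 (snd (fst w))) \<partial>N1 (snd w))
      * indicator C1 (snd w) * indicator C2 (snd (fst w))" for w :: "('g \<times> 'y2) \<times> 'y1"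
    unfolding A'_def by (cases "snd (fst w) \<in> C2") auto
  show ?thesis using B unfolding eq by (simp add: borel_prod)
qed

lemma sets_mo: "sets (measure_of UNIV (sets borel) \<mu>) = (sets borel :: 'a::topological_space set set)"
proof -
  have "sets (measure_of UNIV (sets borel) \<mu>) = sigma_sets UNIV (sets (borel :: 'a measure))"
    by (rule sets_measure_of) simp
  also have "\<dots> = sets borel" using sets.sigma_sets_eq[of "borel :: 'a measure"] by simp
  finally show ?thesis .
qed

theorem lemma5p10:
  fixes S :: "('s::{second_countable_topology, t2_space}) hgpd"
    and G :: "('g::{second_countable_topology, t2_space}) hgpd"
    and T :: "('t::{second_countable_topology, t2_space}) hgpd"
    and p :: "'s \<Rightarrow> 'g" and q :: "'t \<Rightarrow> 'g"
    and \<gamma>p :: "'g \<Rightarrow> 's measure" and \<gamma>q :: "'g \<Rightarrow> 't measure"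
    and f :: "'s \<times> 'g \<times> 't \<Rightarrow> ennreal"
  assumes "haar_groupoid S" and "haar_groupoid G" and "haar_groupoid T"
    and "haar_hom S G p" and "haar_hom T G q"
    and "bsm (units S) (units G) p \<gamma>p" and "loc_finite_bsm (units S) (units G) \<gamma>p"
    and "loc_bounded_bsm (units S) (units G) \<gamma>p" and "disintegrates \<gamma>p (mu0 S) (mu0 G)"
    and "bsm (units T) (units G) q \<gamma>q" and "loc_finite_bsm (units T) (units G) \<gamma>q"
    and "loc_bounded_bsm (units T) (units G) \<gamma>q" and "disintegrates \<gamma>q (mu0 T) (mu0 G)"
    and "f \<in> borel_measurable borel"
  shows "(\<integral>\<^sup>+ z. f z \<partial>wp_induced S G T p q \<gamma>p \<gamma>q) =
    (\<integral>\<^sup>+ u. (\<integral>\<^sup>+ y. (\<integral>\<^sup>+ s. (\<integral>\<^sup>+ \<sigma>. (\<integral>\<^sup>+ t. (\<integral>\<^sup>+ \<tau>. f (\<sigma>, y, \<tau>)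
        \<partial>haar T t) \<partial>\<gamma>q (dm G y)) \<partial>haar S s) \<partial>\<gamma>p (rg G y)) \<partial>haar G u) \<partial>mu0 G)"
proof -
  have tS: "top_groupoid S" and tG: "top_groupoid G" and tT: "top_groupoid T"
    using assms(1-3) unfolding haar_groupoid_def by auto
  have qG: "quasi_inv_radon G" using assms(2) unfolding haar_groupoid_def by auto
  have gG: "groupoid G" using tG unfolding top_groupoid_def by auto
  have pc: "continuous_on UNIV p" using assms(4) unfolding haar_hom_def by blast
  have qc: "continuous_on UNIV q" using assms(5) unfolding haar_hom_def by blast
  obtain DS where kS: "kern (haar S) (units S) DS" using haar_kern[OF assms(1)] by blast
  obtain DT where kT: "kern (haar T) (units T) DT" using haar_kern[OF assms(3)] by blast
  obtain DG where kG: "kern (haar G) (units G) DG" using haar_kern[OF assms(2)] by blast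
  obtain Dp where kp: "kern \<gamma>p (units G) Dp" using bsm_kern[OF tS tG assms(6) assms(7) pc] by blast
  obtain Dq where kq: "kern \<gamma>q (units G) Dq" using bsm_kern[OF tT tG assms(10) assms(11) qc] by blast
  have f: "f \<in> borel_measurable borel" by fact
  have rgc: "continuous_on UNIV (rg G)" and dmc: "continuous_on UNIV (dm G)" using groupoid_cont[OF tG] by auto
  have rgm[measurable]: "rg G \<in> borel_measurable borel" using borel_measurable_continuous_onI[OF rgc] .
  have dmm[measurable]: "dm G \<in> borel_measurable borel" using borel_measurable_continuous_onI[OF dmc] .
  have pm[measurable]: "p \<in> borel_measurable borel" using borel_measurable_continuous_onI[OF pc] .
  have qm[measurable]: "q \<in> borel_measurable borel" using borel_measurable_continuous_onI[OF qc] .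
  have uS[measurable]: "units S \<in> sets borel" using units_borel[OF tS] .
  have uT[measurable]: "units T \<in> sets borel" using units_borel[OF tT] .
  have uG[measurable]: "units G \<in> sets borel" using units_borel[OF tG] .
  have e2: "(borel \<Otimes>\<^sub>M (borel::'t measure) :: ('g \<times> 't) measure) = borel" by (rule borel_prod)
  have e3: "(borel \<Otimes>\<^sub>M (borel \<Otimes>\<^sub>M (borel::'t measure)) :: ('s \<times> 'g \<times> 't) measure) = borel"
    unfolding e2 by (rule borel_prod)
  define P0 where "P0 = wp_units S G T p q"
  have P0b: "P0 \<in> sets (borel :: ('s \<times> 'g \<times> 't) measure)"
  proof -
    have "{v \<in> space (borel \<Otimes>\<^sub>M (borel \<Otimes>\<^sub>M borel)). fst v \<in> units S \<and> snd (snd v) \<in> units T \<and>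
       rg G (fst (snd v)) = p (fst v) \<and> dm G (fst (snd v)) = q (snd (snd v))}
      \<in> sets (borel \<Otimes>\<^sub>M (borel \<Otimes>\<^sub>M (borel :: 't measure)) :: ('s \<times> 'g \<times> 't) measure)"
      by measurable
    moreover have "{v \<in> space (borel \<Otimes>\<^sub>M (borel \<Otimes>\<^sub>M borel)). fst v \<in> units S \<and> snd (snd v) \<in> units T \<and>
       rg G (fst (snd v)) = p (fst v) \<and> dm G (fst (snd v)) = q (snd (snd v))} = P0"
      unfolding P0_def wp_units_def by (auto simp: space_pair_measure)
    ultimately show ?thesis unfolding e3 by simp
  qed
  have PhiEq: "(\<integral>\<^sup>+ z. h z \<partial>wp_haar S T (s, g, t)) = (\<integral>\<^sup>+ \<sigma>. (\<integral>\<^sup>+ \<tau>. h (\<sigma>, g, \<tau>) \<partial>haar T t) \<partial>haar S s)"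
    if h: "h \<in> borel_measurable borel" and v: "(s, g, t) \<in> P0" for h s g t
  proof -
    have s: "s \<in> units S" and t: "t \<in> units T" using v unfolding P0_def wp_units_def by auto
    show ?thesis unfolding wp_haar_def
      using triple_int[OF kern.NS[OF kS s] kern.NS[OF kT t] kern.sf[OF kS s] kern.sf[OF kT t] h] by simp
  qed
  have PhiM: "(\<lambda>v. (\<integral>\<^sup>+ z. h z \<partial>wp_haar S T v) * indicator P0 v) \<in> borel_measurable borel"
    if h: "h \<in> borel_measurable borel" for h
  proof -
    define B where "B w = (\<integral>\<^sup>+ \<sigma>. (\<integral>\<^sup>+ \<tau>. h (\<sigma>, fst (fst w), \<tau>) \<partial>haar T (snd (fst w))) \<partial>haar S (snd w))
      * indicator (units S) (snd w) * indicator (units T) (snd (fst w))" for w :: "('g \<times> 't) \<times> 's"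
    have Bm: "B \<in> borel_measurable ((borel \<Otimes>\<^sub>M borel) \<Otimes>\<^sub>M borel)"
      using two_kern[OF kS kT h] unfolding B_def by (simp add: borel_prod)
    have "(\<lambda>v::'s \<times> 'g \<times> 't. B ((fst (snd v), snd (snd v)), fst v) * indicator P0 v) \<in> borel_measurable (borel \<Otimes>\<^sub>M (borel \<Otimes>\<^sub>M borel))"
      using Bm P0b[folded e3] by measurable
    then have m: "(\<lambda>v::'s \<times> 'g \<times> 't. B ((fst (snd v), snd (snd v)), fst v) * indicator P0 v) \<in> borel_measurable borel"
      unfolding e3 .
    show ?thesis
    proof (rule measurable_cong[THEN iffD2, OF _ m])
      fix v :: "'s \<times> 'g \<times> 't"
      obtain s g t where v: "v = (s, g, t)" by (cases v)
      show "(\<integral>\<^sup>+ z. h z \<partial>wp_haar S T v) * indicator P0 v = B ((fst (snd v), snd (snd v)), fst v) * indicator P0 v"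
      proof (cases "v \<in> P0")
        case True
        have s: "s \<in> units S" and t: "t \<in> units T" using True unfolding v P0_def wp_units_def by auto
        show ?thesis using True PhiEq[OF h True[unfolded v]] s t unfolding v B_def by simp
      qed simp
    qed
  qed
  have EtaEq: "(\<integral>\<^sup>+ z. h z \<partial>wp_eta G \<gamma>p \<gamma>q x) = (\<integral>\<^sup>+ s. (\<integral>\<^sup>+ t. h (s, x, t) \<partial>\<gamma>q (dm G x)) \<partial>\<gamma>p (rg G x))"
    if h: "h \<in> borel_measurable borel" for h x
  proof -
    have r: "rg G x \<in> units G" and d: "dm G x \<in> units G" using rg_units dm_units[OF gG] by auto
    show ?thesis unfolding wp_eta_def
      using triple_int[OF kern.NS[OF kp r] kern.NS[OF kq d] kern.sf[OF kp r] kern.sf[OF kq d] h] by simp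
  qed
  have EtaM: "(\<lambda>x. \<integral>\<^sup>+ z. h z \<partial>wp_eta G \<gamma>p \<gamma>q x) \<in> borel_measurable borel"
    if h: "h \<in> borel_measurable borel" for h
  proof -
    define B where "B w = (\<integral>\<^sup>+ \<sigma>. (\<integral>\<^sup>+ \<tau>. h (\<sigma>, fst (fst w), \<tau>) \<partial>\<gamma>q (snd (fst w))) \<partial>\<gamma>p (snd w))
      * indicator (units G) (snd w) * indicator (units G) (snd (fst w))" for w :: "('g \<times> 'g) \<times> 'g"
    have Bm: "B \<in> borel_measurable ((borel \<Otimes>\<^sub>M borel) \<Otimes>\<^sub>M borel)"
      using two_kern[OF kp kq h] unfolding B_def by (simp add: borel_prod)
    have m: "(\<lambda>x. B ((x, dm G x), rg G x)) \<in> borel_measurable borel"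
      using Bm by measurable
    show ?thesis
    proof (rule measurable_cong[THEN iffD2, OF _ m])
      fix x :: 'g
      have r: "rg G x \<in> units G" and d: "dm G x \<in> units G" using rg_units dm_units[OF gG] by auto
      show "(\<integral>\<^sup>+ z. h z \<partial>wp_eta G \<gamma>p \<gamma>q x) = B ((x, dm G x), rg G x)"
        unfolding EtaEq[OF h] B_def using r d by simp
    qed
  qed
  define \<Phi> where "\<Phi> v = (\<integral>\<^sup>+ z. f z \<partial>wp_haar S T v) * indicator P0 v" for v
  have \<Phi>m: "\<Phi> \<in> borel_measurable borel" unfolding \<Phi>_def using PhiM[OF f] .
  define \<Psi> where "\<Psi> x = (\<integral>\<^sup>+ z. \<Phi> z \<partial>wp_eta G \<gamma>p \<gamma>q x)" for x
  have \<Psi>m: "\<Psi> \<in> borel_measurable borel" unfolding \<Psi>_def using EtaM[OF \<Phi>m] .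
  have step1: "(\<integral>\<^sup>+ z. f z \<partial>wp_induced S G T p q \<gamma>p \<gamma>q) = (\<integral>\<^sup>+ v. \<Phi> v \<partial>wp_mu0 G \<gamma>p \<gamma>q)"
    unfolding wp_induced_def P0_def[symmetric] \<Phi>_def
  proof (rule MO[where F="\<lambda>v E. emeasure (wp_haar S T v) E * indicator P0 v" and N="wp_haar S T" and C=P0
        and M="wp_mu0 G \<gamma>p \<gamma>q"])
    show "sets (wp_mu0 G \<gamma>p \<gamma>q) = sets borel" unfolding wp_mu0_def by (rule sets_mo)
    show NS: "sets (wp_haar S T v) = sets borel" if v: "v \<in> P0" for v
    proof -
      obtain s g t where vv: "v = (s, g, t)" by (cases v)
      have s: "s \<in> units S" and t: "t \<in> units T" using v unfolding vv P0_def wp_units_def by auto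
      show ?thesis unfolding vv wp_haar_def prod.case by (rule sets_triple[OF kern.NS[OF kS s] kern.NS[OF kT t]])
    qed
    show "(\<lambda>v. emeasure (wp_haar S T v) E * indicator P0 v) \<in> borel_measurable borel" if E: "E \<in> sets borel" for E
    proof (rule measurable_cong[THEN iffD2, OF _ PhiM[of "indicator E"]])
      fix v show "emeasure (wp_haar S T v) E * indicator P0 v = (\<integral>\<^sup>+ z. indicator E z \<partial>wp_haar S T v) * indicator P0 v"
        using NS[of v] E by (cases "v \<in> P0") auto
    qed (use E in simp)
    show "\<And>E. E \<in> sets borel \<Longrightarrow> AE v in wp_mu0 G \<gamma>p \<gamma>q. emeasure (wp_haar S T v) E * indicator P0 v =
       emeasure (wp_haar S T v) E * indicator P0 v" by simp
  qed (rule f)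
  have step2: "(\<integral>\<^sup>+ v. \<Phi> v \<partial>wp_mu0 G \<gamma>p \<gamma>q) = (\<integral>\<^sup>+ x. \<Psi> x \<partial>induced G)"
  proof -
    have "(\<integral>\<^sup>+ v. \<Phi> v \<partial>wp_mu0 G \<gamma>p \<gamma>q) = (\<integral>\<^sup>+ x. (\<integral>\<^sup>+ a. \<Phi> a \<partial>wp_eta G \<gamma>p \<gamma>q x) * indicator UNIV x \<partial>induced G)"
      unfolding wp_mu0_def
    proof (rule MO[where F="\<lambda>x B. emeasure (wp_eta G \<gamma>p \<gamma>q x) B" and N="wp_eta G \<gamma>p \<gamma>q" and C=UNIV
          and M="induced G"])
      show "sets (induced G) = sets borel" unfolding induced_def by (rule sets_mo)
      show NS: "sets (wp_eta G \<gamma>p \<gamma>q x) = sets borel" for x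
      proof -
        have r: "rg G x \<in> units G" and d: "dm G x \<in> units G" using rg_units dm_units[OF gG] by auto
        show ?thesis unfolding wp_eta_def by (rule sets_triple[OF kern.NS[OF kp r] kern.NS[OF kq d]])
      qed
      show "(\<lambda>x. emeasure (wp_eta G \<gamma>p \<gamma>q x) E * indicator UNIV x) \<in> borel_measurable borel" if E: "E \<in> sets borel" for E
      proof (rule measurable_cong[THEN iffD2, OF _ EtaM[of "indicator E"]])
        fix x show "emeasure (wp_eta G \<gamma>p \<gamma>q x) E * indicator UNIV x = (\<integral>\<^sup>+ z. indicator E z \<partial>wp_eta G \<gamma>p \<gamma>q x)"
          using NS[of x] E by simp
      qed (use E in simp)
      show "\<And>E. E \<in> sets borel \<Longrightarrow> AE x in induced G. emeasure (wp_eta G \<gamma>p \<gamma>q x) E =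
         emeasure (wp_eta G \<gamma>p \<gamma>q x) E * indicator UNIV x" by simp
    qed (rule \<Phi>m)
    then show ?thesis unfolding \<Psi>_def by simp
  qed
  have AEu: "AE u in mu0 G. u \<in> units G"
  proof (rule AE_I')
    have q1: "sets (mu0 G) = sets borel" using qG unfolding quasi_inv_radon_def by (elim conjE) assumption
    have q2: "emeasure (mu0 G) (- units G) = 0" using qG unfolding quasi_inv_radon_def by (elim conjE) assumption
    show "- units G \<in> null_sets (mu0 G)" using q1 q2 uG by (simp add: null_sets_def)
    show "{x \<in> space (mu0 G). \<not> x \<in> units G} \<subseteq> - units G" by blast
  qed
  have step3: "(\<integral>\<^sup>+ x. \<Psi> x \<partial>induced G) = (\<integral>\<^sup>+ u. (\<integral>\<^sup>+ y. \<Psi> y \<partial>haar G u) * indicator (units G) u \<partial>mu0 G)"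
    unfolding induced_def
  proof (rule MO[where F="\<lambda>u E. emeasure (haar G u) E" and N="haar G" and C="units G" and M="mu0 G"])
    show "sets (mu0 G) = sets borel" using qG unfolding quasi_inv_radon_def by (elim conjE) assumption
    show "\<And>y. y \<in> units G \<Longrightarrow> sets (haar G y) = sets borel" using kern.NS[OF kG] .
    show "\<And>E. E \<in> sets borel \<Longrightarrow> (\<lambda>y. emeasure (haar G y) E * indicator (units G) y) \<in> borel_measurable borel"
      using kern.NM[OF kG] .
    show "\<And>E. E \<in> sets borel \<Longrightarrow> AE y in mu0 G. emeasure (haar G y) E = emeasure (haar G y) E * indicator (units G) y"
      by (rule AE_mp[OF AEu]) (intro AE_I2 impI, simp)
  qed (rule \<Psi>m)
  have PsiEq: "\<Psi> y = (\<integral>\<^sup>+ s. (\<integral>\<^sup>+ \<sigma>. (\<integral>\<^sup>+ t. (\<integral>\<^sup>+ \<tau>. f (\<sigma>, y, \<tau>)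
        \<partial>haar T t) \<partial>\<gamma>q (dm G y)) \<partial>haar S s) \<partial>\<gamma>p (rg G y))" for y
  proof -
    have r: "rg G y \<in> units G" and d: "dm G y \<in> units G" using rg_units dm_units[OF gG] by auto
    have AEs: "AE s in \<gamma>p (rg G y). s \<in> units S \<and> p s = rg G y"
      by (rule bsm_AE[OF assms(6) r uS borel_closed[OF closed_vimage[OF closed_singleton pc]]])
    have AEt: "AE t in \<gamma>q (dm G y). t \<in> units T \<and> q t = dm G y"
      by (rule bsm_AE[OF assms(10) d uT borel_closed[OF closed_vimage[OF closed_singleton qc]]])
    define A where "A z = (\<integral>\<^sup>+ \<tau>. f (fst (fst z), snd (fst z), \<tau>) \<partial>haar T (snd z)) * indicator (units T) (snd z)"
      for z :: "('s \<times> 'g) \<times> 't"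
    have Am: "A \<in> borel_measurable ((borel \<Otimes>\<^sub>M borel) \<Otimes>\<^sub>M borel)"
    proof -
      have h': "f \<in> borel_measurable (borel \<Otimes>\<^sub>M (borel \<Otimes>\<^sub>M borel))" using f unfolding e3 .
      have \<phi>: "(\<lambda>z::('s \<times> 'g) \<times> 't. (fst (fst z), snd (fst z), snd z)) \<in> measurable ((borel \<Otimes>\<^sub>M borel) \<Otimes>\<^sub>M borel) (borel \<Otimes>\<^sub>M (borel \<Otimes>\<^sub>M borel))"
        by measurable
      have "(\<lambda>z::('s \<times> 'g) \<times> 't. f (fst (fst z), snd (fst z), snd z)) \<in> borel_measurable ((borel \<Otimes>\<^sub>M borel) \<Otimes>\<^sub>M borel)"
        using measurable_compose[OF \<phi> h'] by simp
      then have "(\<lambda>z::('s \<times> 'g) \<times> 't. f (fst (fst z), snd (fst z), snd z)) \<in> borel_measurable (borel \<Otimes>\<^sub>M borel)"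
        by (simp add: borel_prod)
      from kern.ker_fun[OF kT this] show ?thesis unfolding A_def by (simp add: borel_prod)
    qed
    have "\<Psi> y = (\<integral>\<^sup>+ s. (\<integral>\<^sup>+ t. \<Phi> (s, y, t) \<partial>\<gamma>q (dm G y)) \<partial>\<gamma>p (rg G y))"
      unfolding \<Psi>_def using EtaEq[OF \<Phi>m] .
    also have "\<dots> = (\<integral>\<^sup>+ s. (\<integral>\<^sup>+ \<sigma>. (\<integral>\<^sup>+ t. (\<integral>\<^sup>+ \<tau>. f (\<sigma>, y, \<tau>)
        \<partial>haar T t) \<partial>\<gamma>q (dm G y)) \<partial>haar S s) \<partial>\<gamma>p (rg G y))"
    proof (rule nn_integral_cong_AE)
      show "AE s in \<gamma>p (rg G y). (\<integral>\<^sup>+ t. \<Phi> (s, y, t) \<partial>\<gamma>q (dm G y)) = (\<integral>\<^sup>+ \<sigma>. (\<integral>\<^sup>+ t. (\<integral>\<^sup>+ \<tau>. f (\<sigma>, y, \<tau>)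
        \<partial>haar T t) \<partial>\<gamma>q (dm G y)) \<partial>haar S s)"
        using AEs
      proof (rule AE_mp, intro AE_I2 impI)
        fix s assume s: "s \<in> units S \<and> p s = rg G y"
        interpret PS: pair_sigma_finite "haar S s" "\<gamma>q (dm G y)"
          by (intro pair_sigma_finite.intro kern.sf[OF kS] kern.sf[OF kq d]) (use s in auto)
        have km: "case_prod (\<lambda>\<sigma> t. A ((\<sigma>, y), t)) \<in> borel_measurable (haar S s \<Otimes>\<^sub>M \<gamma>q (dm G y))"
        proof -
          have m1: "(\<lambda>w::'s \<times> 't. ((fst w, y), snd w)) \<in> measurable (borel \<Otimes>\<^sub>M borel) ((borel \<Otimes>\<^sub>M borel) \<Otimes>\<^sub>M borel)"
            by measurable
          have m2: "(\<lambda>w::'s \<times> 't. A ((fst w, y), snd w)) \<in> borel_measurable (borel \<Otimes>\<^sub>M borel)"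
            using measurable_compose[OF m1 Am] .
          have ss: "sets (haar S s \<Otimes>\<^sub>M \<gamma>q (dm G y)) = sets (borel \<Otimes>\<^sub>M borel)"
            using s by (intro sets_pair_measure_cong kern.NS[OF kS] kern.NS[OF kq d]) auto
          have eqf: "case_prod (\<lambda>\<sigma> t. A ((\<sigma>, y), t)) = (\<lambda>w::'s \<times> 't. A ((fst w, y), snd w))"
            by (rule ext) (simp add: split_beta)
          show ?thesis unfolding eqf using m2 measurable_cong_sets[OF ss refl] by blast
        qed
        have "(\<integral>\<^sup>+ t. \<Phi> (s, y, t) \<partial>\<gamma>q (dm G y)) = (\<integral>\<^sup>+ t. (\<integral>\<^sup>+ \<sigma>. A ((\<sigma>, y), t) \<partial>haar S s) \<partial>\<gamma>q (dm G y))"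
        proof (rule nn_integral_cong_AE)
          show "AE t in \<gamma>q (dm G y). \<Phi> (s, y, t) = (\<integral>\<^sup>+ \<sigma>. A ((\<sigma>, y), t) \<partial>haar S s)"
            using AEt
          proof (rule AE_mp, intro AE_I2 impI)
            fix t assume t: "t \<in> units T \<and> q t = dm G y"
            have inP: "(s, y, t) \<in> P0" using s t unfolding P0_def wp_units_def by auto
            show "\<Phi> (s, y, t) = (\<integral>\<^sup>+ \<sigma>. A ((\<sigma>, y), t) \<partial>haar S s)"
              unfolding \<Phi>_def A_def using PhiEq[OF f inP] inP t by simp
          qed
        qed
        also have "\<dots> = (\<integral>\<^sup>+ \<sigma>. (\<integral>\<^sup>+ t. A ((\<sigma>, y), t) \<partial>\<gamma>q (dm G y)) \<partial>haar S s)"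
          using PS.Fubini'[OF km] .
        also have "\<dots> = (\<integral>\<^sup>+ \<sigma>. (\<integral>\<^sup>+ t. (\<integral>\<^sup>+ \<tau>. f (\<sigma>, y, \<tau>) \<partial>haar T t) \<partial>\<gamma>q (dm G y)) \<partial>haar S s)"
        proof (rule nn_integral_cong)
          fix \<sigma>
          show "(\<integral>\<^sup>+ t. A ((\<sigma>, y), t) \<partial>\<gamma>q (dm G y)) = (\<integral>\<^sup>+ t. (\<integral>\<^sup>+ \<tau>. f (\<sigma>, y, \<tau>) \<partial>haar T t) \<partial>\<gamma>q (dm G y))"
            by (rule nn_integral_cong_AE, rule AE_mp[OF AEt], intro AE_I2 impI) (simp add: A_def)
        qed
        finally show "(\<integral>\<^sup>+ t. \<Phi> (s, y, t) \<partial>\<gamma>q (dm G y)) = (\<integral>\<^sup>+ \<sigma>. (\<integral>\<^sup>+ t. (\<integral>\<^sup>+ \<tau>. f (\<sigma>, y, \<tau>)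
          \<partial>haar T t) \<partial>\<gamma>q (dm G y)) \<partial>haar S s)" .
      qed
    qed
    finally show ?thesis .
  qed
  have step4: "(\<integral>\<^sup>+ u. (\<integral>\<^sup>+ y. \<Psi> y \<partial>haar G u) * indicator (units G) u \<partial>mu0 G) =
    (\<integral>\<^sup>+ u. (\<integral>\<^sup>+ y. (\<integral>\<^sup>+ s. (\<integral>\<^sup>+ \<sigma>. (\<integral>\<^sup>+ t. (\<integral>\<^sup>+ \<tau>. f (\<sigma>, y, \<tau>)
        \<partial>haar T t) \<partial>\<gamma>q (dm G y)) \<partial>haar S s) \<partial>\<gamma>p (rg G y)) \<partial>haar G u) \<partial>mu0 G)"
    by (rule nn_integral_cong_AE, rule AE_mp[OF AEu], intro AE_I2 impI) (simp add: PsiEq)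
  show ?thesis using step1 step2 step3 step4 by simp
qed

end
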